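(* Let $\Omega_0\subset\mathbb{R}^3$ be a bounded Lipschitz domain with outward unit normal $N$, whose boundary is split as $\partial\Omega_0=\Sigma_D\cup\Sigma_N$ (disjoint). Let $\rho_0>0$ and let $C=2\mu\,\mathcal{I}_s+\lambda\,I\otimes I$ with $\mu>0$, $3\lambda+2\mu>0$. Consider the system $\rho_0\dot v=\mathrm{Div}(F\cdot S)$, $C^{-1}:\dot S=\tfrac12(F^T\cdot\mathrm{Grad}(v)+\mathrm{Grad}(v)^T\cdot F)$, $\dot F=\mathrm{Grad}(v)$ on $\Omega_0$ ($v$ vector-valued, $S$ symmetric-tensor-valued, $F$ tensor-valued), with Neumann condition $F\cdot S\cdot N=\bar\tau_0$ on $\Sigma_N$ and Dirichlet condition $v=\bar\nu$ on $\Sigma_D$, in the weak form: for all test functions $\delta v$ (vector), $\delta S$ (symmetric tensor), $\delta T$ (tensor), $$\int_{\Omega_0}\delta v\cdot\rho_0\dot v+(\mathrm{Grad}(\delta v)^T\cdot F):S\,d\Omega_0-\int_{\Sigma_D}\delta v\cdot F\cdot S\cdot N\,d\Sigma_D-\int_{\Sigma_N}\delta v\cdot\bar\tau_0\,d\Sigma_N=0,$$ $$\int_{\Omega_0}\delta S:C^{-1}:\dot S-\delta S:(F^T\cdot\mathrm{Grad}(v))\,d\Omega_0+\int_{\Sigma_D}(F\cdot\delta S\cdot N)\cdot v\,d\Sigma_D-\int_{\Sigma_D}(F\cdot\delta S\cdot N)\cdot\bar\nu\,d\Sigma_D=0,$$ $$\int_{\Omega_0}\delta T:\dot F-\delta T:\mathrm{Grad}(v)\,d\Omega_0=0.$$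 Apply a Galerkin discretization with trial and test functions from the same bases: $v=\sum_i\phi_i\hat v_i(t)$, $\delta v=\sum_i\phi_i\delta\hat v_i$; $S=\sum_j\psi_j\hat S_j(t)$, $\delta S=\sum_j\psi_j\delta\hat S_j$; $F=\sum_l\theta_l\hat F_l(t)$, $\delta T=\sum_l\theta_l\delta\hat T_l$; $\bar\tau_0=\sum_k\xi_k\hat\tau_{0,k}(t)$, $\bar\nu=\sum_m\zeta_m\hat\nu_m(t)$, where $\{\phi_i\}$ (vector fields), $\{\psi_j\}$ (symmetric tensor fields), $\{\theta_l\}$ (tensor fields) are linearly independent families of sufficiently regular functions. Define $M_v=[\int_{\Omega_0}\rho_0\phi_i\cdot\phi_{i'}]$, $M_S=[\int_{\Omega_0}\psi_j:C^{-1}:\psi_{j'}]$, $M_F=[\int_{\Omega_0}\theta_l:\theta_{l'}]$, $Z=[\int_{\Omega_0}\theta_l:\mathrm{Grad}(\phi_i)]_{l,i}$, $K(\hat F)=\big[\int_{\Omega_0}(\mathrm{Grad}(\phi_i)^T\cdot F):\psi_j\,d\Omega_0-\int_{\Sigma_D}\phi_i\cdot F\cdot\psi_j\cdot N\,d\Sigma_D\big]_{i,j}$, $G_\tau=[\int_{\Sigma_N}\phi_i\cdot\xi_k]_{i,k}$, $G_\nu(\hat F)=[\int_{\Sigma_D}(F\cdot\psi_j\cdot N)\cdot\zeta_m]_{j,m}$, with $F=\sum_l\theta_l\hat F_l$. Then the discretized weak form is the port-Hamiltonian state space model $$\begin{bmatrix}M_v&0&0\\0&M_S&0\\0&0&M_F\end{bmatrix}\begin{bmatrix}\dot{\hat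 v}\\ \dot{\hat S}\\ \dot{\hat F}\end{bmatrix}=\begin{bmatrix}0&-K(\hat F)&-Z^T\\ K(\hat F)^T&0&0\\ Z&0&0\end{bmatrix}\begin{bmatrix}\hat v\\ \hat S\\ 0\end{bmatrix}+\begin{bmatrix}G_\tau&0\\0&G_\nu(\hat F)\\0&0\end{bmatrix}\begin{bmatrix}\hat\tau_0\\ \hat\nu\end{bmatrix},\qquad y=\begin{bmatrix}G_\tau^T&0&0\\0&G_\nu(\hat F)^T&0\end{bmatrix}\begin{bmatrix}\hat v\\ \hat S\\ 0\end{bmatrix},$$ where the mass matrix is symmetric positive definite and the structure matrix is skew-symmetric, and with the quadratic Hamiltonian $\hat H=\tfrac12\hat v^TM_v\hat v+\tfrac12\hat S^TM_S\hat S$ the power balance $\frac{d}{dt}\hat H=\hat v^TG_\tau\hat\tau_0+\hat S^TG_\nu(\hat F)\hat\nu=y^T\begin{bmatrix}\hat\tau_0\\ \hat\nu\end{bmatrix}$ holds.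
   Context: Tensor conventions: $(A\cdot B)_{ij}=A_{ik}B_{kj}$, $A:B=A_{ij}B_{ij}$, $\mathrm{Grad}(w)_{ij}=\partial w_i/\partial X_j$, $\mathrm{Div}(A)_i=\partial A_{ij}/\partial X_j$ (summation over repeated indices), derivatives with respect to the material coordinate $X$. $I$ is the second-order identity, $\mathcal{I}_s$ the symmetric fourth-order identity, $(I\otimes I)_{ijkl}=\delta_{ij}\delta_{kl}$; $C^{-1}$ denotes the inverse of $C$ on symmetric tensors. A dot denotes time derivative. Matrices written $[\cdot]_{a,b}$ have row index $a$ and column index $b$; for square mass matrices $[\cdot]$ with indices $(i,i')$ etc. $\hat v,\hat S,\hat F,\hat\tau_0,\hat\nu$ are the coefficient vectors. *)

theory Defs
  imports "HOL-Analysis.Analysis"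
begin

definition ddot :: "real^'n^'m \<Rightarrow> real^'n^'m \<Rightarrow> real" where
  "ddot A B = (\<Sum>i\<in>UNIV. \<Sum>j\<in>UNIV. A$i$j * B$i$j)"

definition Grad :: "(real^3 \<Rightarrow> real^3) \<Rightarrow> real^3 \<Rightarrow> real^3^3" where
  "Grad w X = jacobian w (at X)"

text \<open>Elasticity tensor C = 2 mu I_s + lam I (x) I acting on a second-order tensor.\<close>
definition elast :: "real \<Rightarrow> real \<Rightarrow> real^3^3 \<Rightarrow> real^3^3" where
  "elast \<mu> lam A = (2 * \<mu>) *\<^sub>R ((1/2) *\<^sub>R (A + transpose A)) + (lam * trace A) *\<^sub>R mat 1"

definition elast_inv :: "real \<Rightarrow> real \<Rightarrow> real^3^3 \<Rightarrow> real^3^3" where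
  "elast_inv \<mu> lam S = (THE A. transpose A = A \<and> elast \<mu> lam A = S)"

definition lipschitz_domain :: "(real^3) set \<Rightarrow> bool" where
  "lipschitz_domain \<Omega> \<longleftrightarrow> open \<Omega> \<and> connected \<Omega> \<and> \<Omega> \<noteq> {} \<and>
     (\<forall>x\<in>frontier \<Omega>. \<exists>(R :: real^3 \<Rightarrow> real^3) (r::real) (h::real) (L::real) (g :: real \<Rightarrow> real \<Rightarrow> real).
        orthogonal_transformation R \<and> 0 < r \<and> 0 < h \<and> g 0 0 = 0 \<and>
        (\<forall>a b a' b'. \<bar>g a b - g a' b'\<bar> \<le> L * sqrt ((a - a')\<^sup>2 + (b - b')\<^sup>2)) \<and>
        (\<forall>a b. a\<^sup>2 + b\<^sup>2 < r\<^sup>2 \<longrightarrow> \<bar>g a b\<bar> < h) \<and>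
        (\<forall>y. (R (y - x))$1 ^ 2 + (R (y - x))$2 ^ 2 < r\<^sup>2 \<and> \<bar>(R (y - x))$3\<bar> < h \<longrightarrow>
              (y \<in> \<Omega> \<longleftrightarrow> (R (y - x))$3 < g ((R (y - x))$1) ((R (y - x))$2))))"

definition field :: "real^'i \<Rightarrow> ('i \<Rightarrow> 'x \<Rightarrow> 'y::real_vector) \<Rightarrow> 'x \<Rightarrow> 'y" where
  "field c b X = (\<Sum>i\<in>UNIV. c$i *\<^sub>R b i X)"

definition tder :: "(real \<Rightarrow> 'x \<Rightarrow> 'y::real_normed_vector) \<Rightarrow> real \<Rightarrow> 'x \<Rightarrow> 'y" where
  "tder u t X = vector_derivative (\<lambda>s. u s X) (at t)"

definition lin_indep_on :: "'x set \<Rightarrow> ('i::finite \<Rightarrow> 'x \<Rightarrow> 'y::real_vector) \<Rightarrow> bool" where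
  "lin_indep_on A b \<longleftrightarrow>
     (\<forall>c :: 'i \<Rightarrow> real. (\<forall>X\<in>A. (\<Sum>i\<in>UNIV. c i *\<^sub>R b i X) = 0) \<longrightarrow> (\<forall>i. c i = 0))"

definition Mv :: "real \<Rightarrow> (real^3) set \<Rightarrow> ('v::finite \<Rightarrow> real^3 \<Rightarrow> real^3) \<Rightarrow> real^'v^'v" where
  "Mv \<rho>0 \<Omega> \<phi> = (\<chi> i i'. set_lebesgue_integral lborel \<Omega> (\<lambda>X. \<rho>0 * (\<phi> i X \<bullet> \<phi> i' X)))"

definition MS :: "real \<Rightarrow> real \<Rightarrow> (real^3) set \<Rightarrow> ('s::finite \<Rightarrow> real^3 \<Rightarrow> real^3^3) \<Rightarrow> real^'s^'s" where
  "MS \<mu> lam \<Omega> \<psi> = (\<chi> j j'. set_lebesgue_integral lborel \<Omega> (\<lambda>X. ddot (\<psi> j X) (elast_inv \<mu> lam (\<psi> j' X))))"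

definition MF :: "(real^3) set \<Rightarrow> ('f::finite \<Rightarrow> real^3 \<Rightarrow> real^3^3) \<Rightarrow> real^'f^'f" where
  "MF \<Omega> \<theta> = (\<chi> l l'. set_lebesgue_integral lborel \<Omega> (\<lambda>X. ddot (\<theta> l X) (\<theta> l' X)))"

definition Zmat :: "(real^3) set \<Rightarrow> ('v::finite \<Rightarrow> real^3 \<Rightarrow> real^3) \<Rightarrow> ('f::finite \<Rightarrow> real^3 \<Rightarrow> real^3^3) \<Rightarrow> real^'v^'f" where
  "Zmat \<Omega> \<phi> \<theta> = (\<chi> l i. set_lebesgue_integral lborel \<Omega> (\<lambda>X. ddot (\<theta> l X) (Grad (\<phi> i) X)))"

definition Kmat :: "(real^3) set \<Rightarrow> (real^3) set \<Rightarrow> (real^3) measure \<Rightarrow> (real^3 \<Rightarrow> real^3) \<Rightarrow>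
    ('v::finite \<Rightarrow> real^3 \<Rightarrow> real^3) \<Rightarrow> ('s::finite \<Rightarrow> real^3 \<Rightarrow> real^3^3) \<Rightarrow>
    ('f::finite \<Rightarrow> real^3 \<Rightarrow> real^3^3) \<Rightarrow> real^'f \<Rightarrow> real^'s^'v" where
  "Kmat \<Omega> \<Sigma>D \<sigma> N \<phi> \<psi> \<theta> Fc = (\<chi> i j.
      set_lebesgue_integral lborel \<Omega> (\<lambda>X. ddot (transpose (Grad (\<phi> i) X) ** field Fc \<theta> X) (\<psi> j X))
    - set_lebesgue_integral \<sigma> \<Sigma>D (\<lambda>X. \<phi> i X \<bullet> ((field Fc \<theta> X ** \<psi> j X) *v N X)))"

definition Gtau :: "(real^3) set \<Rightarrow> (real^3) measure \<Rightarrow> ('v::finite \<Rightarrow> real^3 \<Rightarrow> real^3) \<Rightarrow>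
    ('k::finite \<Rightarrow> real^3 \<Rightarrow> real^3) \<Rightarrow> real^'k^'v" where
  "Gtau \<Sigma>N \<sigma> \<phi> \<xi> = (\<chi> i k. set_lebesgue_integral \<sigma> \<Sigma>N (\<lambda>X. \<phi> i X \<bullet> \<xi> k X))"

definition Gnu :: "(real^3) set \<Rightarrow> (real^3) measure \<Rightarrow> (real^3 \<Rightarrow> real^3) \<Rightarrow>
    ('s::finite \<Rightarrow> real^3 \<Rightarrow> real^3^3) \<Rightarrow> ('f::finite \<Rightarrow> real^3 \<Rightarrow> real^3^3) \<Rightarrow>
    ('m::finite \<Rightarrow> real^3 \<Rightarrow> real^3) \<Rightarrow> real^'f \<Rightarrow> real^'m^'s" where
  "Gnu \<Sigma>D \<sigma> N \<psi> \<theta> \<zeta> Fc = (\<chi> j m.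
      set_lebesgue_integral \<sigma> \<Sigma>D (\<lambda>X. ((field Fc \<theta> X ** \<psi> j X) *v N X) \<bullet> \<zeta> m X))"

definition sel3 :: "('a \<Rightarrow> 'x) \<Rightarrow> ('b \<Rightarrow> 'x) \<Rightarrow> ('c \<Rightarrow> 'x) \<Rightarrow> 'a + ('b + 'c) \<Rightarrow> 'x" where
  "sel3 f g h = case_sum f (case_sum g h)"

definition stack3 :: "real^'a \<Rightarrow> real^'b \<Rightarrow> real^'c \<Rightarrow> real^('a + ('b + 'c))" where
  "stack3 a b c = (\<chi> r. sel3 (\<lambda>i. a$i) (\<lambda>i. b$i) (\<lambda>i. c$i) r)"

definition stack2 :: "real^'a \<Rightarrow> real^'b \<Rightarrow> real^('a + 'b)" where
  "stack2 a b = (\<chi> r. case_sum (\<lambda>i. a$i) (\<lambda>i. b$i) r)"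

definition block33 ::
  "real^'a^'a \<Rightarrow> real^'b^'a \<Rightarrow> real^'c^'a \<Rightarrow>
   real^'a^'b \<Rightarrow> real^'b^'b \<Rightarrow> real^'c^'b \<Rightarrow>
   real^'a^'c \<Rightarrow> real^'b^'c \<Rightarrow> real^'c^'c \<Rightarrow> real^('a + ('b + 'c))^('a + ('b + 'c))" where
  "block33 A11 A12 A13 A21 A22 A23 A31 A32 A33 = (\<chi> r s.
     sel3 (\<lambda>i. sel3 (\<lambda>j. A11$i$j) (\<lambda>j. A12$i$j) (\<lambda>j. A13$i$j) s)
          (\<lambda>i. sel3 (\<lambda>j. A21$i$j) (\<lambda>j. A22$i$j) (\<lambda>j. A23$i$j) s)
          (\<lambda>i. sel3 (\<lambda>j. A31$i$j) (\<lambda>j. A32$i$j) (\<lambda>j. A33$i$j) s) r)"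

definition block32 ::
  "real^'d^'a \<Rightarrow> real^'e^'a \<Rightarrow> real^'d^'b \<Rightarrow> real^'e^'b \<Rightarrow> real^'d^'c \<Rightarrow> real^'e^'c
   \<Rightarrow> real^('d + 'e)^('a + ('b + 'c))" where
  "block32 A11 A12 A21 A22 A31 A32 = (\<chi> r s.
     sel3 (\<lambda>i. case_sum (\<lambda>j. A11$i$j) (\<lambda>j. A12$i$j) s)
          (\<lambda>i. case_sum (\<lambda>j. A21$i$j) (\<lambda>j. A22$i$j) s)
          (\<lambda>i. case_sum (\<lambda>j. A31$i$j) (\<lambda>j. A32$i$j) s) r)"

definition block23 ::
  "real^'a^'d \<Rightarrow> real^'b^'d \<Rightarrow> real^'c^'d \<Rightarrow> real^'a^'e \<Rightarrow> real^'b^'e \<Rightarrow> real^'c^'e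
   \<Rightarrow> real^('a + ('b + 'c))^('d + 'e)" where
  "block23 A11 A12 A13 A21 A22 A23 = (\<chi> r s.
     case_sum (\<lambda>i. sel3 (\<lambda>j. A11$i$j) (\<lambda>j. A12$i$j) (\<lambda>j. A13$i$j) s)
              (\<lambda>i. sel3 (\<lambda>j. A21$i$j) (\<lambda>j. A22$i$j) (\<lambda>j. A23$i$j) s) r)"

end

theory Submission
  imports Defs
begin

lemma sum_UNIV_Plus:
  "(\<Sum>x\<in>(UNIV::('a::finite + 'b::finite) set). f x) = (\<Sum>a\<in>UNIV. f (Inl a)) + (\<Sum>b\<in>UNIV. f (Inr b))"
  by (subst UNIV_Plus_UNIV[symmetric], subst sum.Plus) (auto simp: comp_def)

lemma stack3_nth [simp]:
  "stack3 a b c $ Inl i = a $ i" "stack3 a b c $ Inr (Inl j) = b $ j" "stack3 a b c $ Inr (Inr k) = c $ k"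
  by (simp_all add: stack3_def sel3_def)

lemma stack2_nth [simp]:
  "stack2 a b $ Inl i = a $ i" "stack2 a b $ Inr j = b $ j"
  by (simp_all add: stack2_def)

lemma block33_mult:
  "block33 A11 A12 A13 A21 A22 A23 A31 A32 A33 *v stack3 a b c =
   stack3 (A11 *v a + A12 *v b + A13 *v c) (A21 *v a + A22 *v b + A23 *v c) (A31 *v a + A32 *v b + A33 *v c)"
  unfolding vec_eq_iff
proof
  fix r show "(block33 A11 A12 A13 A21 A22 A23 A31 A32 A33 *v stack3 a b c) $ r =
   stack3 (A11 *v a + A12 *v b + A13 *v c) (A21 *v a + A22 *v b + A23 *v c) (A31 *v a + A32 *v b + A33 *v c) $ r"
  proof (cases r)
    case (Inr q) then show ?thesis
      by (cases q) (simp_all add: matrix_vector_mult_def block33_def sel3_def sum_UNIV_Plus)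
  qed (simp_all add: matrix_vector_mult_def block33_def sel3_def sum_UNIV_Plus)
qed

lemma block32_mult:
  "block32 A11 A12 A21 A22 A31 A32 *v stack2 a b =
   stack3 (A11 *v a + A12 *v b) (A21 *v a + A22 *v b) (A31 *v a + A32 *v b)"
  unfolding vec_eq_iff
proof
  fix r show "(block32 A11 A12 A21 A22 A31 A32 *v stack2 a b) $ r =
   stack3 (A11 *v a + A12 *v b) (A21 *v a + A22 *v b) (A31 *v a + A32 *v b) $ r"
  proof (cases r)
    case (Inr q) then show ?thesis
      by (cases q) (simp_all add: matrix_vector_mult_def block32_def sel3_def sum_UNIV_Plus)
  qed (simp_all add: matrix_vector_mult_def block32_def sel3_def sum_UNIV_Plus)
qed

lemma block23_mult:
  "block23 A11 A12 A13 A21 A22 A23 *v stack3 a b c =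
   stack2 (A11 *v a + A12 *v b + A13 *v c) (A21 *v a + A22 *v b + A23 *v c)"
  unfolding vec_eq_iff
proof
  fix r show "(block23 A11 A12 A13 A21 A22 A23 *v stack3 a b c) $ r =
   stack2 (A11 *v a + A12 *v b + A13 *v c) (A21 *v a + A22 *v b + A23 *v c) $ r"
    by (cases r rule: sum.exhaust)
      (simp_all add: matrix_vector_mult_def block23_def sel3_def sum_UNIV_Plus)
qed

lemma transpose_block33:
  "transpose (block33 A11 A12 A13 A21 A22 A23 A31 A32 A33) =
   block33 (transpose A11) (transpose A21) (transpose A31) (transpose A12) (transpose A22) (transpose A32)
           (transpose A13) (transpose A23) (transpose A33)"
  unfolding vec_eq_iff transpose_def block33_def
  by (auto simp: sel3_def split: sum.splits)

lemma uminus_block33: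
  "- block33 A11 A12 A13 A21 A22 A23 A31 A32 A33 =
   block33 (-A11) (-A12) (-A13) (-A21) (-A22) (-A23) (-A31) (-A32) (-A33)"
  unfolding vec_eq_iff block33_def
  by (auto simp: sel3_def split: sum.splits)

lemma inner_stack3: "stack3 a b c \<bullet> stack3 a' b' c' = a \<bullet> a' + b \<bullet> b' + c \<bullet> c'"
  by (simp add: inner_vec_def sum_UNIV_Plus)

lemma inner_stack2: "stack2 a b \<bullet> stack2 a' b' = a \<bullet> a' + b \<bullet> b'"
  by (simp add: inner_vec_def sum_UNIV_Plus)

lemma stack3_eq_iff: "stack3 a b c = stack3 a' b' c' \<longleftrightarrow> a = a' \<and> b = b' \<and> c = c'"
proof
  assume h: "stack3 a b c = stack3 a' b' c'"
  have "a $ i = a' $ i \<and> b $ i' = b' $ i' \<and> c $ i'' = c' $ i''" for i i' i''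
    using arg_cong[OF h, of "\<lambda>x. x $ Inl i"] arg_cong[OF h, of "\<lambda>x. x $ Inr (Inl i')"]
      arg_cong[OF h, of "\<lambda>x. x $ Inr (Inr i'')"] by simp
  then show "a = a' \<and> b = b' \<and> c = c'" by (simp add: vec_eq_iff)
qed simp

lemma stack3_surj: "x = stack3 (\<chi> i. x $ Inl i) (\<chi> i. x $ Inr (Inl i)) (\<chi> i. x $ Inr (Inr i))"
  unfolding vec_eq_iff
  by (auto simp: stack3_def sel3_def split: sum.splits)

lemma stack3_zero: "stack3 0 0 0 = 0"
  unfolding vec_eq_iff
  by (auto simp: stack3_def sel3_def split: sum.splits)

lemma ddot_inner: "ddot A B = A \<bullet> B"
  by (simp add: ddot_def inner_vec_def)

lemma transpose_sum_scale:
  "transpose (\<Sum>i\<in>I. c i *\<^sub>R (A i :: real^'n^'m)) = (\<Sum>i\<in>I. c i *\<^sub>R transpose (A i))"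
  by (simp add: vec_eq_iff transpose_def)

lemma matrix_add_rdistrib': "((A + B) ** C) = (A ** C) + (B ** C)"
  by (vector matrix_matrix_mult_def sum.distrib[symmetric] field_simps)

lemma matmul_sum_left:
  "(\<Sum>i\<in>I. c i *\<^sub>R (A i :: real^'n^'m)) ** (B :: real^'k^'n) = (\<Sum>i\<in>I. c i *\<^sub>R (A i ** B))"
  by (induct I rule: infinite_finite_induct)
     (simp_all add: matrix_add_rdistrib' scalar_matrix_assoc)

lemma matmul_sum_right:
  "(B :: real^'n^'m) ** (\<Sum>i\<in>I. c i *\<^sub>R (A i :: real^'k^'n)) = (\<Sum>i\<in>I. c i *\<^sub>R (B ** A i))"
  by (induct I rule: infinite_finite_induct)
     (simp_all add: matrix_add_ldistrib matrix_scalar_ac scalar_matrix_assoc[symmetric])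

lemma mvmul_sum_left:
  "(\<Sum>i\<in>I. c i *\<^sub>R (A i :: real^'n^'m)) *v (x :: real^'n) = (\<Sum>i\<in>I. c i *\<^sub>R (A i *v x))"
  by (induct I rule: infinite_finite_induct)
     (simp_all add: matrix_vector_mult_add_rdistrib scaleR_matrix_vector_assoc)

lemma matrix_sum_scale:
  "matrix (\<lambda>h. \<Sum>i\<in>I. c i *\<^sub>R (g i h :: real^'m)) = (\<Sum>i\<in>I. c i *\<^sub>R matrix (g i :: real^'n \<Rightarrow> real^'m))"
  unfolding matrix_def vec_eq_iff by simp

lemma Grad_field:
  assumes "\<forall>i. \<phi> i differentiable (at X)"
  shows "Grad (field c \<phi>) X = (\<Sum>i\<in>UNIV. c $ i *\<^sub>R Grad (\<phi> i) X)"
proof -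
  have d: "(\<phi> i has_derivative frechet_derivative (\<phi> i) (at X)) (at X)" for i
    using assms frechet_derivative_works by blast
  have "((\<lambda>X. \<Sum>i\<in>UNIV. c $ i *\<^sub>R \<phi> i X) has_derivative
        (\<lambda>h. \<Sum>i\<in>UNIV. c $ i *\<^sub>R frechet_derivative (\<phi> i) (at X) h)) (at X)"
    by (intro has_derivative_sum bounded_linear.has_derivative[OF bounded_linear_scaleR_right] d)
  then have h: "(field c \<phi> has_derivative
        (\<lambda>h. \<Sum>i\<in>UNIV. c $ i *\<^sub>R frechet_derivative (\<phi> i) (at X) h)) (at X)"
    unfolding field_def[abs_def] .
  have fd: "frechet_derivative (field c \<phi>) (at X) =
        (\<lambda>h. \<Sum>i\<in>UNIV. c $ i *\<^sub>R frechet_derivative (\<phi> i) (at X) h)"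
    using frechet_derivative_at[OF h] by simp
  show ?thesis
    unfolding Grad_def jacobian_def fd matrix_sum_scale ..
qed

lemma tder_field:
  assumes "u differentiable (at t)"
  shows "tder (\<lambda>s. field (u s) b) t X = field (vector_derivative u (at t)) b X"
proof -
  have u: "(u has_vector_derivative vector_derivative u (at t)) (at t)"
    using assms vector_derivative_works by blast
  have "((\<lambda>s. \<Sum>i\<in>UNIV. u s $ i *\<^sub>R b i X) has_vector_derivative
          (\<Sum>i\<in>UNIV. vector_derivative u (at t) $ i *\<^sub>R b i X)) (at t)"
    by (intro has_vector_derivative_sum bounded_linear.has_vector_derivative[OF bounded_linear_scaleR_left]
        bounded_linear.has_vector_derivative[OF bounded_linear_vec_nth] u)
  then show ?thesis
    unfolding tder_def field_def by (rule vector_derivative_at)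
qed

lemma field_sym:
  fixes \<psi> :: "'j::finite \<Rightarrow> 'x \<Rightarrow> real^'n^'n"
  assumes "\<forall>j X. transpose (\<psi> j X) = \<psi> j X"
  shows "transpose (field c \<psi> X) = field c \<psi> X"
  using assms by (simp add: field_def vec_eq_iff transpose_def)

definition einv :: "real \<Rightarrow> real \<Rightarrow> real^3^3 \<Rightarrow> real^3^3" where
  "einv \<mu> lam S = (1/(2*\<mu>)) *\<^sub>R (S - (lam/(2*\<mu>+3*lam) * trace S) *\<^sub>R mat 1)"

lemma trace_scaleR: "trace (k *\<^sub>R (A::real^'n^'n)) = k * trace A"
  by (simp add: trace_def sum_distrib_left)

lemma trace_sum_scale: "trace (\<Sum>i\<in>I. c i *\<^sub>R (A i::real^'n^'n)) = (\<Sum>i\<in>I. c i * trace (A i))"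
  by (induct I rule: infinite_finite_induct) (simp_all add: trace_add trace_scaleR trace_0[simplified])

lemma trace_mat1_3: "trace (mat 1 :: real^3^3) = 3"
  by (simp add: trace_I)

lemma inner_mat1: "(A::real^'n^'n) \<bullet> mat 1 = trace A"
  by (simp add: inner_vec_def trace_def mat_def inner_real_def if_distrib cong: if_cong)

lemma elast_inv_eq:
  assumes mu: "\<mu> > 0" and lm: "3 * lam + 2 * \<mu> > 0" and S: "transpose S = S"
  shows "elast_inv \<mu> lam S = einv \<mu> lam S"
  unfolding elast_inv_def
proof (rule the_equality)
  have nz: "2*\<mu>+3*lam \<noteq> 0" using lm by simp
  show "transpose (einv \<mu> lam S) = einv \<mu> lam S \<and> elast \<mu> lam (einv \<mu> lam S) = S"
  proof
    show "transpose (einv \<mu> lam S) = einv \<mu> lam S"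
      using S by (simp add: einv_def vec_eq_iff transpose_def mat_def)
    then have E: "elast \<mu> lam (einv \<mu> lam S) = (2*\<mu>) *\<^sub>R einv \<mu> lam S + (lam * trace (einv \<mu> lam S)) *\<^sub>R mat 1"
      by (simp add: elast_def scaleR_2[symmetric] del: scaleR_2)
    define d where "d = 2*\<mu>+3*lam"
    have dnz: "d \<noteq> 0" using nz d_def by simp
    have ed: "einv \<mu> lam S = (1/(2*\<mu>)) *\<^sub>R (S - (lam/d * trace S) *\<^sub>R mat 1)"
      by (simp add: einv_def d_def)
    have "trace (einv \<mu> lam S) = (1/(2*\<mu>)) * (trace S - 3*(lam/d)*trace S)"
      unfolding ed by (simp add: trace_sub trace_scaleR trace_mat1_3)
    also have "\<dots> = trace S / d"
      using mu dnz unfolding d_def by (simp add: field_simps)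
    finally have tr: "trace (einv \<mu> lam S) = trace S / d" .
    have "(2*\<mu>) *\<^sub>R einv \<mu> lam S = S - (lam/d * trace S) *\<^sub>R mat 1"
      unfolding ed using mu by simp
    then show "elast \<mu> lam (einv \<mu> lam S) = S"
      unfolding E tr by (simp add: algebra_simps)
  qed
  fix A assume A: "transpose A = A \<and> elast \<mu> lam A = S"
  then have At: "transpose A = A" and eA: "elast \<mu> lam A = S" by auto
  have e: "S = (2*\<mu>) *\<^sub>R A + (lam * trace A) *\<^sub>R mat 1"
    unfolding eA[symmetric] using At by (simp add: elast_def scaleR_2[symmetric] del: scaleR_2)
  define d where "d = 2*\<mu>+3*lam"
  have dnz: "d \<noteq> 0" using nz d_def by simp
  have tS: "trace S = d * trace A"
    unfolding e d_def by (simp add: trace_add trace_scaleR trace_mat1_3 algebra_simps)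
  have "(2*\<mu>) *\<^sub>R A = S - (lam * trace A) *\<^sub>R mat 1" unfolding e by simp
  also have "lam * trace A = lam / d * trace S" using tS dnz by simp
  finally have "(2*\<mu>) *\<^sub>R A = S - (lam / d * trace S) *\<^sub>R mat 1" .
  then have "A = (1/(2*\<mu>)) *\<^sub>R (S - (lam / d * trace S) *\<^sub>R mat 1)"
    using mu by (metis (no_types, lifting) divide_eq_0_iff less_numeral_extra(3) mult_eq_0_iff nonzero_mult_div_cancel_left scaleR_one scaleR_scaleR times_divide_eq_left zero_neq_numeral)
  then show "A = einv \<mu> lam S"
    by (simp add: einv_def d_def)
qed

lemma ddot_einv:
  "ddot X (einv \<mu> lam Y) = (1/(2*\<mu>)) * (X \<bullet> Y - lam/(2*\<mu>+3*lam) * trace X * trace Y)"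
  by (simp add: einv_def ddot_inner inner_diff_right inner_mat1)

lemma trace_sq_le: "(trace (X::real^3^3))^2 \<le> 3 * (X \<bullet> X)"
proof -
  have "X \<bullet> X = (\<Sum>i\<in>UNIV. \<Sum>j\<in>UNIV. X$i$j * X$i$j)" by (simp add: inner_vec_def)
  also have "\<dots> \<ge> X$1$1^2 + X$2$2^2 + X$3$3^2"
    by (simp add: sum_3 power2_eq_square add_nonneg_nonneg)
  finally have "X$1$1^2 + X$2$2^2 + X$3$3^2 \<le> X \<bullet> X" .
  moreover have "(trace X)^2 \<le> 3 * (X$1$1^2 + X$2$2^2 + X$3$3^2)"
  proof -
    have "0 \<le> (X$1$1 - X$2$2)^2 + (X$2$2 - X$3$3)^2 + (X$1$1 - X$3$3)^2" by simp
    then show ?thesis by (simp add: trace_def sum_3 power2_eq_square algebra_simps)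
  qed
  ultimately show ?thesis by simp
qed

lemma einv_pos:
  assumes mu: "\<mu> > 0" and lm: "3 * lam + 2 * \<mu> > 0"
  shows "ddot X (einv \<mu> lam X) \<ge> 0" and "X \<noteq> 0 \<Longrightarrow> ddot X (einv \<mu> lam X) > 0"
proof -
  define c where "c = lam/(2*\<mu>+3*lam)"
  have c3: "1 - 3*c > 0" using mu lm by (simp add: c_def field_simps)
  have key: "X \<bullet> X - c * trace X * trace X \<ge> (min 1 (1 - 3*c)) * (X \<bullet> X)"
  proof (cases "c \<ge> 0")
    case True
    have "c * (trace X)^2 \<le> c * (3 * (X \<bullet> X))" using mult_left_mono[OF trace_sq_le[of X] True] .
    then have "X \<bullet> X - c * trace X * trace X \<ge> (1 - 3*c) * (X \<bullet> X)"
      by (simp add: power2_eq_square algebra_simps)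
    moreover have "(min 1 (1 - 3*c)) * (X \<bullet> X) \<le> (1 - 3*c) * (X \<bullet> X)"
      by (intro mult_right_mono) auto
    ultimately show ?thesis by linarith
  next
    case False
    have "c * (trace X * trace X) \<le> 0" using False by (simp add: mult_nonpos_nonneg)
    moreover have "min 1 (1 - 3*c) * (X \<bullet> X) \<le> 1 * (X \<bullet> X)" by (intro mult_right_mono) auto
    ultimately show ?thesis by (simp add: algebra_simps)
  qed
  have m: "min 1 (1 - 3*c) > 0" using c3 by simp
  have e: "ddot X (einv \<mu> lam X) = (1/(2*\<mu>)) * (X \<bullet> X - c * trace X * trace X)"
    by (simp add: ddot_einv c_def)
  have "0 \<le> min 1 (1-3*c) * (X \<bullet> X)" using m by simp
  then have "0 \<le> X \<bullet> X - c * trace X * trace X" using key by linarith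
  then show "ddot X (einv \<mu> lam X) \<ge> 0"
    unfolding e using mu by simp
  assume "X \<noteq> 0"
  then have "X \<bullet> X > 0" by simp
  then have "min 1 (1 - 3*c) * (X \<bullet> X) > 0" using m by simp
  then show "ddot X (einv \<mu> lam X) > 0"
    unfolding e using key mu by (intro mult_pos_pos) auto
qed

lemma sint_integrable_cong:
  assumes "\<forall>x\<in>A. f x = g x" "set_integrable M A f"
  shows "set_integrable M A g"
proof -
  have "(\<lambda>x. indicator A x *\<^sub>R f x) = (\<lambda>x. indicator A x *\<^sub>R g x)"
    using assms(1) by (auto simp: fun_eq_iff split: split_indicator)
  then show ?thesis using assms(2) unfolding set_integrable_def by simp
qed

lemma sint_cong:
  assumes "\<forall>x\<in>A. f x = g x"
  shows "(LINT x:A|M. f x) = (LINT x:A|M. g x)"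
proof -
  have "(\<lambda>x. indicator A x *\<^sub>R f x) = (\<lambda>x. indicator A x *\<^sub>R g x)"
    using assms(1) by (auto simp: fun_eq_iff split: split_indicator)
  then show ?thesis unfolding set_lebesgue_integral_def by simp
qed

lemma sint_sum:
  fixes f :: "'i \<Rightarrow> 'x \<Rightarrow> real"
  assumes "\<forall>i\<in>I. set_integrable M A (f i)"
  shows "set_integrable M A (\<lambda>x. \<Sum>i\<in>I. f i x)"
    "(LINT x:A|M. (\<Sum>i\<in>I. f i x)) = (\<Sum>i\<in>I. LINT x:A|M. f i x)"
proof -
  have eq: "(\<lambda>x. indicator A x *\<^sub>R (\<Sum>i\<in>I. f i x)) = (\<lambda>x. \<Sum>i\<in>I. indicator A x *\<^sub>R f i x)"
    by (simp add: scaleR_sum_right sum_distrib_left)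
  show "set_integrable M A (\<lambda>x. \<Sum>i\<in>I. f i x)"
    using assms unfolding set_integrable_def eq by (intro Bochner_Integration.integrable_sum) auto
  show "(LINT x:A|M. (\<Sum>i\<in>I. f i x)) = (\<Sum>i\<in>I. LINT x:A|M. f i x)"
    using assms unfolding set_integrable_def set_lebesgue_integral_def eq by (intro Bochner_Integration.integral_sum) auto
qed

lemma int_lin:
  fixes g :: "'i::finite \<Rightarrow> 'x \<Rightarrow> real"
  assumes "\<forall>i. set_integrable M A (g i)"
  shows "set_integrable M A (\<lambda>x. \<Sum>i\<in>UNIV. a i * g i x)"
    "(LINT x:A|M. (\<Sum>i\<in>UNIV. a i * g i x)) = (\<Sum>i\<in>UNIV. a i * (LINT x:A|M. g i x))"
proof -
  have *: "\<forall>i\<in>UNIV. set_integrable M A (\<lambda>x. a i * g i x)"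
    using assms by (auto intro!: set_integrable_mult_right)
  show "set_integrable M A (\<lambda>x. \<Sum>i\<in>UNIV. a i * g i x)" using sint_sum(1)[OF *] .
  show "(LINT x:A|M. (\<Sum>i\<in>UNIV. a i * g i x)) = (\<Sum>i\<in>UNIV. a i * (LINT x:A|M. g i x))"
    using sint_sum(2)[OF *] by (simp only: set_integral_mult_right)
qed

lemma int_bilin:
  fixes g :: "'i::finite \<Rightarrow> 'j::finite \<Rightarrow> 'x \<Rightarrow> real"
  assumes "\<forall>i j. set_integrable M A (g i j)"
  shows "set_integrable M A (\<lambda>x. \<Sum>i\<in>UNIV. \<Sum>j\<in>UNIV. a i * b j * g i j x)"
    "(LINT x:A|M. (\<Sum>i\<in>UNIV. \<Sum>j\<in>UNIV. a i * b j * g i j x)) =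
       (\<Sum>i\<in>UNIV. \<Sum>j\<in>UNIV. a i * b j * (LINT x:A|M. g i j x))"
proof -
  have *: "\<forall>i\<in>UNIV. \<forall>j\<in>UNIV. set_integrable M A (\<lambda>x. a i * b j * g i j x)"
    using assms by (auto intro!: set_integrable_mult_right)
  have **: "\<forall>i\<in>UNIV. set_integrable M A (\<lambda>x. \<Sum>j\<in>UNIV. a i * b j * g i j x)"
  proof
    fix i :: 'i assume "i \<in> UNIV"
    have "\<forall>j\<in>UNIV. set_integrable M A (\<lambda>x. a i * b j * g i j x)" using * by simp
    then show "set_integrable M A (\<lambda>x. \<Sum>j\<in>UNIV. a i * b j * g i j x)" by (rule sint_sum(1))
  qed
  show "set_integrable M A (\<lambda>x. \<Sum>i\<in>UNIV. \<Sum>j\<in>UNIV. a i * b j * g i j x)"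
    using sint_sum(1)[OF **] .
  show "(LINT x:A|M. (\<Sum>i\<in>UNIV. \<Sum>j\<in>UNIV. a i * b j * g i j x)) =
       (\<Sum>i\<in>UNIV. \<Sum>j\<in>UNIV. a i * b j * (LINT x:A|M. g i j x))"
  proof -
    have "(LINT x:A|M. (\<Sum>i\<in>UNIV. \<Sum>j\<in>UNIV. a i * b j * g i j x)) =
          (\<Sum>i\<in>UNIV. LINT x:A|M. (\<Sum>j\<in>UNIV. a i * b j * g i j x))"
      using sint_sum(2)[OF **] .
    also have "\<dots> = (\<Sum>i\<in>UNIV. \<Sum>j\<in>UNIV. LINT x:A|M. a i * b j * g i j x)"
    proof (rule sum.cong[OF refl])
      fix i :: 'i
      have "\<forall>j\<in>UNIV. set_integrable M A (\<lambda>x. a i * b j * g i j x)" using * by simp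
      then show "(LINT x:A|M. (\<Sum>j\<in>UNIV. a i * b j * g i j x)) = (\<Sum>j\<in>UNIV. LINT x:A|M. a i * b j * g i j x)"
        by (rule sint_sum(2))
    qed
    also have "\<dots> = (\<Sum>i\<in>UNIV. \<Sum>j\<in>UNIV. a i * b j * (LINT x:A|M. g i j x))"
      by (simp only: set_integral_mult_right)
    finally show ?thesis .
  qed
qed

lemma inner_mat_vec:
  "a \<bullet> ((\<chi> i j. m i j) *v b) = (\<Sum>i\<in>UNIV. \<Sum>j\<in>UNIV. a$i * b$j * m i j)"
  by (simp add: inner_vec_def matrix_vector_mult_def sum_distrib_left ac_simps)

lemma inner_tmat_vec:
  "a \<bullet> (transpose (\<chi> i j. m i j) *v b) = (\<Sum>i\<in>UNIV. \<Sum>j\<in>UNIV. b$i * a$j * m i j)"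
proof -
  have "a \<bullet> (transpose (\<chi> i j. m i j) *v b) = (\<Sum>j\<in>UNIV. \<Sum>i\<in>UNIV. b$i * a$j * m i j)"
    by (simp add: inner_vec_def matrix_vector_mult_def transpose_def sum_distrib_left ac_simps)
  also have "\<dots> = (\<Sum>i\<in>UNIV. \<Sum>j\<in>UNIV. b$i * a$j * m i j)"
    by (rule sum.swap)
  finally show ?thesis .
qed

lemma pos_int:
  fixes f :: "real^'n \<Rightarrow> real"
  assumes "open \<Omega>" "continuous_on \<Omega> f" "\<forall>x\<in>\<Omega>. f x \<ge> 0" "X0 \<in> \<Omega>" "f X0 > 0"
    "set_integrable lborel \<Omega> f"
  shows "(LINT x:\<Omega>|lborel. f x) > 0"
proof -
  define c where "c = f X0 / 2"
  have c: "c > 0" using assms(5) by (simp add: c_def)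
  have ov: "\<forall>B. open B \<longrightarrow> open (f -` B \<inter> \<Omega>)"
    using iffD1[OF continuous_on_open_vimage[OF assms(1)] assms(2)] .
  have op: "open (f -` {c<..} \<inter> \<Omega>)"
    using ov open_greaterThan by simp
  have X0: "X0 \<in> f -` {c<..} \<inter> \<Omega>" using assms(4,5) by (simp add: c_def)
  obtain e where e: "e > 0" "ball X0 e \<subseteq> f -` {c<..} \<inter> \<Omega>"
    using openE[OF op X0] by metis
  define B where "B = ball X0 e"
  have BO: "B \<subseteq> \<Omega>" and Bc: "\<And>y. y \<in> B \<Longrightarrow> f y > c" using e(2) unfolding B_def by auto
  have Bm: "B \<in> sets lborel" unfolding B_def by simp
  have Bf: "emeasure lborel B < \<infinity>" unfolding B_def by (rule emeasure_bounded_finite) simp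
  have ind: "(\<lambda>x. indicator \<Omega> x *\<^sub>R (c * indicator B x)) = (\<lambda>x. c * indicator B x)"
  proof
    fix x show "indicator \<Omega> x *\<^sub>R (c * indicator B x) = c * (indicator B x :: real)"
      using BO by (cases "x \<in> B") auto
  qed
  have si: "set_integrable lborel \<Omega> (\<lambda>x. c * indicator B x)"
    unfolding set_integrable_def ind using Bm Bf by (intro integrable_mult_right integrable_real_indicator)
  have val: "(LINT x:\<Omega>|lborel. c * indicator B x) = c * measure lborel B"
    unfolding set_lebesgue_integral_def ind by simp
  have "measure lborel B > 0" unfolding B_def using e(1) by simp
  then have "0 < (LINT x:\<Omega>|lborel. c * indicator B x)" unfolding val using c by simp
  also have "\<dots> \<le> (LINT x:\<Omega>|lborel. f x)"
  proof (rule set_integral_mono[OF si assms(6)])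
    fix x assume x: "x \<in> \<Omega>"
    show "c * indicator B x \<le> f x"
    proof (cases "x \<in> B")
      case True then show ?thesis using Bc[OF True] by simp
    next
      case False then show ?thesis using assms(3) x by simp
    qed
  qed
  finally show ?thesis .
qed

lemma transpose_zero' [simp]: "transpose (0::real^'n^'m) = 0"
  by (simp add: vec_eq_iff transpose_def)

lemma transpose_uminus' [simp]: "transpose (- (A::real^'n^'m)) = - transpose A"
  by (simp add: vec_eq_iff transpose_def)

lemma stack3_add: "stack3 a b c + stack3 a' b' c' = stack3 (a+a') (b+b') (c+c')"
  by (simp add: vec_eq_iff stack3_def sel3_def split: sum.splits)

lemma sum_swap_inner:
  "(\<Sum>i\<in>A. \<Sum>l\<in>B. \<Sum>j\<in>C. f i l j) = (\<Sum>i\<in>A. \<Sum>j\<in>C. \<Sum>l\<in>B. f i l j)"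
  by (rule sum.cong[OF refl], rule sum.swap)

lemma exp_inner:
  fixes f :: "'i::finite \<Rightarrow> 'x \<Rightarrow> 'y::real_inner" and g :: "'j::finite \<Rightarrow> 'x \<Rightarrow> 'y"
  shows "field a f X \<bullet> field b g X = (\<Sum>i\<in>UNIV. \<Sum>j\<in>UNIV. a$i * b$j * (f i X \<bullet> g j X))"
  by (simp add: field_def inner_sum_left) (simp add: inner_sum_right sum_distrib_left ac_simps)

lemma exp_K:
  fixes \<phi> :: "'v::finite \<Rightarrow> real^3 \<Rightarrow> real^3" and \<theta> :: "'f::finite \<Rightarrow> real^3 \<Rightarrow> real^3^3"
    and \<psi> :: "'s::finite \<Rightarrow> real^3 \<Rightarrow> real^3^3"
  assumes "\<forall>i. \<phi> i differentiable (at X)"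
  shows "ddot (transpose (Grad (field a \<phi>) X) ** field F \<theta> X) (field b \<psi> X) =
    (\<Sum>i\<in>UNIV. \<Sum>j\<in>UNIV. a$i * b$j * (\<Sum>l\<in>UNIV. F$l * ddot (transpose (Grad (\<phi> i) X) ** \<theta> l X) (\<psi> j X)))"
proof -
  have "ddot (transpose (Grad (field a \<phi>) X) ** field F \<theta> X) (field b \<psi> X) =
    (\<Sum>i\<in>UNIV. \<Sum>l\<in>UNIV. \<Sum>j\<in>UNIV. a$i * b$j * (F$l * ddot (transpose (Grad (\<phi> i) X) ** \<theta> l X) (\<psi> j X)))"
    unfolding Grad_field[OF assms] transpose_sum_scale field_def ddot_inner
    unfolding matmul_sum_left
    unfolding matmul_sum_right
    by (simp add: inner_sum_left) (simp add: inner_sum_right sum_distrib_left ac_simps)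
  also have "\<dots> = (\<Sum>i\<in>UNIV. \<Sum>j\<in>UNIV. \<Sum>l\<in>UNIV. a$i * b$j * (F$l * ddot (transpose (Grad (\<phi> i) X) ** \<theta> l X) (\<psi> j X)))"
    by (rule sum_swap_inner)
  finally show ?thesis by (simp add: sum_distrib_left)
qed

lemma exp_K1:
  fixes \<theta> :: "'f::finite \<Rightarrow> real^3 \<Rightarrow> real^3^3"
  shows "ddot (transpose G ** field F \<theta> X) P = (\<Sum>l\<in>UNIV. F$l * ddot (transpose G ** \<theta> l X) P)"
  unfolding field_def matmul_sum_right ddot_inner by (simp add: inner_sum_left)

lemma exp_B:
  fixes \<phi> :: "'v::finite \<Rightarrow> real^3 \<Rightarrow> real^3" and \<theta> :: "'f::finite \<Rightarrow> real^3 \<Rightarrow> real^3^3"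
    and \<psi> :: "'s::finite \<Rightarrow> real^3 \<Rightarrow> real^3^3"
  shows "field a \<phi> X \<bullet> ((field F \<theta> X ** field b \<psi> X) *v N X) =
    (\<Sum>i\<in>UNIV. \<Sum>j\<in>UNIV. a$i * b$j * (\<Sum>l\<in>UNIV. F$l * (\<phi> i X \<bullet> ((\<theta> l X ** \<psi> j X) *v N X))))"
    unfolding field_def matmul_sum_left matmul_sum_right mvmul_sum_left
    by (simp add: inner_sum_left) (simp add: inner_sum_right sum_distrib_left ac_simps)

lemma exp_B1:
  fixes \<theta> :: "'f::finite \<Rightarrow> real^3 \<Rightarrow> real^3^3"
  shows "u \<bullet> ((field F \<theta> X ** P) *v n) = (\<Sum>l\<in>UNIV. F$l * (u \<bullet> ((\<theta> l X ** P) *v n)))"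
  unfolding field_def matmul_sum_left mvmul_sum_left by (simp add: inner_sum_right)

lemma exp_G:
  fixes \<theta> :: "'f::finite \<Rightarrow> real^3 \<Rightarrow> real^3^3" and \<psi> :: "'s::finite \<Rightarrow> real^3 \<Rightarrow> real^3^3"
    and \<zeta> :: "'m::finite \<Rightarrow> real^3 \<Rightarrow> real^3"
  shows "((field F \<theta> X ** field b \<psi> X) *v N X) \<bullet> field c \<zeta> X =
    (\<Sum>j\<in>UNIV. \<Sum>m\<in>UNIV. b$j * c$m * (((field F \<theta> X ** \<psi> j X) *v N X) \<bullet> \<zeta> m X))"
  unfolding field_def[of b] field_def[of c] matmul_sum_right mvmul_sum_left
  by (simp add: inner_sum_left) (simp add: inner_sum_right sum_distrib_left ac_simps)

lemma ddot_sym_swap: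
  assumes "transpose S = S"
  shows "ddot S (transpose F ** G) = ddot (transpose G ** F) (S::real^'n^'n)"
proof -
  have s: "S$b$a = S$a$b" for a b using assms by (metis transpose_def vec_lambda_beta)
  have "ddot S (transpose F ** G) = (\<Sum>a\<in>UNIV. \<Sum>b\<in>UNIV. \<Sum>k\<in>UNIV. S$a$b * (F$k$a * G$k$b))"
    by (simp add: ddot_def matrix_matrix_mult_def transpose_def sum_distrib_left)
  also have "\<dots> = (\<Sum>b\<in>UNIV. \<Sum>a\<in>UNIV. \<Sum>k\<in>UNIV. S$a$b * (F$k$a * G$k$b))"
    by (rule sum.swap)
  also have "\<dots> = (\<Sum>b\<in>UNIV. \<Sum>a\<in>UNIV. \<Sum>k\<in>UNIV. S$b$a * (F$k$a * G$k$b))"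
    by (intro sum.cong refl) (simp add: s)
  also have "\<dots> = ddot (transpose G ** F) S"
    by (simp add: ddot_def matrix_matrix_mult_def transpose_def sum_distrib_right sum_distrib_left ac_simps)
  finally show ?thesis .
qed

definition KOm :: "(real^3) set \<Rightarrow> ('v::finite \<Rightarrow> real^3 \<Rightarrow> real^3) \<Rightarrow> ('s::finite \<Rightarrow> real^3 \<Rightarrow> real^3^3) \<Rightarrow>
    ('f::finite \<Rightarrow> real^3 \<Rightarrow> real^3^3) \<Rightarrow> real^'f \<Rightarrow> real^'s^'v" where
  "KOm \<Omega> \<phi> \<psi> \<theta> F = (\<chi> i j. \<Sum>l\<in>UNIV. F$l *
     set_lebesgue_integral lborel \<Omega> (\<lambda>X. ddot (transpose (Grad (\<phi> i) X) ** \<theta> l X) (\<psi> j X)))"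

definition KSm :: "(real^3) set \<Rightarrow> (real^3) measure \<Rightarrow> (real^3 \<Rightarrow> real^3) \<Rightarrow> ('v::finite \<Rightarrow> real^3 \<Rightarrow> real^3) \<Rightarrow> ('s::finite \<Rightarrow> real^3 \<Rightarrow> real^3^3) \<Rightarrow>
    ('f::finite \<Rightarrow> real^3 \<Rightarrow> real^3^3) \<Rightarrow> real^'f \<Rightarrow> real^'s^'v" where
  "KSm \<Sigma>D \<sigma> N \<phi> \<psi> \<theta> F = (\<chi> i j. \<Sum>l\<in>UNIV. F$l *
     set_lebesgue_integral \<sigma> \<Sigma>D (\<lambda>X. \<phi> i X \<bullet> ((\<theta> l X ** \<psi> j X) *v N X)))"

lemma Kmat_split:
  fixes \<phi> :: "'v::finite \<Rightarrow> real^3 \<Rightarrow> real^3" and \<psi> :: "'s::finite \<Rightarrow> real^3 \<Rightarrow> real^3^3"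
    and \<theta> :: "'f::finite \<Rightarrow> real^3 \<Rightarrow> real^3^3"
  assumes i5: "\<forall>i l j. set_integrable lborel \<Omega> (\<lambda>X. ddot (transpose (Grad (\<phi> i) X) ** \<theta> l X) (\<psi> j X))"
    and i6: "\<forall>i l j. set_integrable \<sigma> \<Sigma>D (\<lambda>X. \<phi> i X \<bullet> ((\<theta> l X ** \<psi> j X) *v N X))"
  shows "Kmat \<Omega> \<Sigma>D \<sigma> N \<phi> \<psi> \<theta> F = KOm \<Omega> \<phi> \<psi> \<theta> F - KSm \<Sigma>D \<sigma> N \<phi> \<psi> \<theta> F"
proof -
  have a: "set_lebesgue_integral lborel \<Omega> (\<lambda>X. ddot (transpose (Grad (\<phi> i) X) ** field F \<theta> X) (\<psi> j X))
     = (\<Sum>l\<in>UNIV. F$l * set_lebesgue_integral lborel \<Omega> (\<lambda>X. ddot (transpose (Grad (\<phi> i) X) ** \<theta> l X) (\<psi> j X)))" for i j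
  proof -
    have "\<forall>l. set_integrable lborel \<Omega> (\<lambda>X. ddot (transpose (Grad (\<phi> i) X) ** \<theta> l X) (\<psi> j X))" using i5 by blast
    from int_lin(2)[OF this, of "\<lambda>l. F$l"] show ?thesis by (simp only: exp_K1)
  qed
  have b: "set_lebesgue_integral \<sigma> \<Sigma>D (\<lambda>X. \<phi> i X \<bullet> ((field F \<theta> X ** \<psi> j X) *v N X))
     = (\<Sum>l\<in>UNIV. F$l * set_lebesgue_integral \<sigma> \<Sigma>D (\<lambda>X. \<phi> i X \<bullet> ((\<theta> l X ** \<psi> j X) *v N X)))" for i j
  proof -
    have "\<forall>l. set_integrable \<sigma> \<Sigma>D (\<lambda>X. \<phi> i X \<bullet> ((\<theta> l X ** \<psi> j X) *v N X))" using i6 by blast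
    from int_lin(2)[OF this, of "\<lambda>l. F$l"] show ?thesis by (simp only: exp_B1)
  qed
  show ?thesis
    unfolding Kmat_def KOm_def KSm_def by (simp add: vec_eq_iff a b)
qed

lemma weak1:
  fixes \<phi> :: "'v::finite \<Rightarrow> real^3 \<Rightarrow> real^3" and \<psi> :: "'s::finite \<Rightarrow> real^3 \<Rightarrow> real^3^3"
    and \<theta> :: "'f::finite \<Rightarrow> real^3 \<Rightarrow> real^3^3" and \<xi> :: "'k::finite \<Rightarrow> real^3 \<Rightarrow> real^3"
  assumes d: "\<forall>X\<in>\<Omega>. \<forall>i. \<phi> i differentiable (at X)"
    and i1: "\<forall>i i'. set_integrable lborel \<Omega> (\<lambda>X. \<phi> i X \<bullet> \<phi> i' X)"
    and i5: "\<forall>i l j. set_integrable lborel \<Omega> (\<lambda>X. ddot (transpose (Grad (\<phi> i) X) ** \<theta> l X) (\<psi> j X))"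
    and i6: "\<forall>i l j. set_integrable \<sigma> \<Sigma>D (\<lambda>X. \<phi> i X \<bullet> ((\<theta> l X ** \<psi> j X) *v N X))"
    and i7: "\<forall>i k. set_integrable \<sigma> \<Sigma>N (\<lambda>X. \<phi> i X \<bullet> \<xi> k X)"
  shows "set_lebesgue_integral lborel \<Omega> (\<lambda>X.
                field dv \<phi> X \<bullet> (\<rho>0 *\<^sub>R field vd \<phi> X)
              + ddot (transpose (Grad (field dv \<phi>) X) ** field F \<theta> X) (field S \<psi> X))
            - set_lebesgue_integral \<sigma> \<Sigma>D (\<lambda>X.
                field dv \<phi> X \<bullet> ((field F \<theta> X ** field S \<psi> X) *v N X))
            - set_lebesgue_integral \<sigma> \<Sigma>N (\<lambda>X. field dv \<phi> X \<bullet> field tau \<xi> X)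
       = dv \<bullet> (Mv \<rho>0 \<Omega> \<phi> *v vd + Kmat \<Omega> \<Sigma>D \<sigma> N \<phi> \<psi> \<theta> F *v S - Gtau \<Sigma>N \<sigma> \<phi> \<xi> *v tau)"
proof -
  have j1: "\<forall>i i'. set_integrable lborel \<Omega> (\<lambda>X. \<rho>0 * (\<phi> i X \<bullet> \<phi> i' X))"
  proof (intro allI)
    fix i i'
    have "set_integrable lborel \<Omega> (\<lambda>X. \<phi> i X \<bullet> \<phi> i' X)" using i1 by blast
    then show "set_integrable lborel \<Omega> (\<lambda>X. \<rho>0 * (\<phi> i X \<bullet> \<phi> i' X))"
      by (rule set_integrable_mult_right)
  qed
  have j5: "\<forall>i j. set_integrable lborel \<Omega> (\<lambda>X. \<Sum>l\<in>UNIV. F$l * ddot (transpose (Grad (\<phi> i) X) ** \<theta> l X) (\<psi> j X))"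
  proof (intro allI)
    fix i j
    have "\<forall>l. set_integrable lborel \<Omega> (\<lambda>X. ddot (transpose (Grad (\<phi> i) X) ** \<theta> l X) (\<psi> j X))" using i5 by blast
    then show "set_integrable lborel \<Omega> (\<lambda>X. \<Sum>l\<in>UNIV. F$l * ddot (transpose (Grad (\<phi> i) X) ** \<theta> l X) (\<psi> j X))"
      by (rule int_lin(1))
  qed
  have j6: "\<forall>i j. set_integrable \<sigma> \<Sigma>D (\<lambda>X. \<Sum>l\<in>UNIV. F$l * (\<phi> i X \<bullet> ((\<theta> l X ** \<psi> j X) *v N X)))"
  proof (intro allI)
    fix i j
    have "\<forall>l. set_integrable \<sigma> \<Sigma>D (\<lambda>X. \<phi> i X \<bullet> ((\<theta> l X ** \<psi> j X) *v N X))" using i6 by blast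
    then show "set_integrable \<sigma> \<Sigma>D (\<lambda>X. \<Sum>l\<in>UNIV. F$l * (\<phi> i X \<bullet> ((\<theta> l X ** \<psi> j X) *v N X)))"
      by (rule int_lin(1))
  qed
  have lO: "set_lebesgue_integral lborel \<Omega> (\<lambda>X. \<Sum>l\<in>UNIV. F$l * ddot (transpose (Grad (\<phi> i) X) ** \<theta> l X) (\<psi> j X))
     = (\<Sum>l\<in>UNIV. F$l * set_lebesgue_integral lborel \<Omega> (\<lambda>X. ddot (transpose (Grad (\<phi> i) X) ** \<theta> l X) (\<psi> j X)))" for i j
  proof -
    have "\<forall>l. set_integrable lborel \<Omega> (\<lambda>X. ddot (transpose (Grad (\<phi> i) X) ** \<theta> l X) (\<psi> j X))" using i5 by blast
    then show ?thesis by (rule int_lin(2))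
  qed
  have lS: "set_lebesgue_integral \<sigma> \<Sigma>D (\<lambda>X. \<Sum>l\<in>UNIV. F$l * (\<phi> i X \<bullet> ((\<theta> l X ** \<psi> j X) *v N X)))
     = (\<Sum>l\<in>UNIV. F$l * set_lebesgue_integral \<sigma> \<Sigma>D (\<lambda>X. \<phi> i X \<bullet> ((\<theta> l X ** \<psi> j X) *v N X)))" for i j
  proof -
    have "\<forall>l. set_integrable \<sigma> \<Sigma>D (\<lambda>X. \<phi> i X \<bullet> ((\<theta> l X ** \<psi> j X) *v N X))" using i6 by blast
    then show ?thesis by (rule int_lin(2))
  qed
  have pA: "\<forall>X\<in>\<Omega>. (\<Sum>i\<in>UNIV. \<Sum>j\<in>UNIV. dv$i * vd$j * (\<rho>0 * (\<phi> i X \<bullet> \<phi> j X))) = field dv \<phi> X \<bullet> (\<rho>0 *\<^sub>R field vd \<phi> X)"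
    unfolding inner_scaleR_right exp_inner by (simp add: sum_distrib_left ac_simps)
  have pB: "\<forall>X\<in>\<Omega>. (\<Sum>i\<in>UNIV. \<Sum>j\<in>UNIV. dv$i * S$j * (\<Sum>l\<in>UNIV. F$l * ddot (transpose (Grad (\<phi> i) X) ** \<theta> l X) (\<psi> j X)))
      = ddot (transpose (Grad (field dv \<phi>) X) ** field F \<theta> X) (field S \<psi> X)"
  proof
    fix X assume "X \<in> \<Omega>"
    then have "\<forall>i. \<phi> i differentiable (at X)" using d by blast
    then show "(\<Sum>i\<in>UNIV. \<Sum>j\<in>UNIV. dv$i * S$j * (\<Sum>l\<in>UNIV. F$l * ddot (transpose (Grad (\<phi> i) X) ** \<theta> l X) (\<psi> j X)))
      = ddot (transpose (Grad (field dv \<phi>) X) ** field F \<theta> X) (field S \<psi> X)"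
      by (rule exp_K[symmetric])
  qed
  have pC: "\<forall>X\<in>\<Sigma>D. (\<Sum>i\<in>UNIV. \<Sum>j\<in>UNIV. dv$i * S$j * (\<Sum>l\<in>UNIV. F$l * (\<phi> i X \<bullet> ((\<theta> l X ** \<psi> j X) *v N X))))
      = field dv \<phi> X \<bullet> ((field F \<theta> X ** field S \<psi> X) *v N X)"
  proof
    fix X show "(\<Sum>i\<in>UNIV. \<Sum>j\<in>UNIV. dv$i * S$j * (\<Sum>l\<in>UNIV. F$l * (\<phi> i X \<bullet> ((\<theta> l X ** \<psi> j X) *v N X))))
      = field dv \<phi> X \<bullet> ((field F \<theta> X ** field S \<psi> X) *v N X)"
      by (rule exp_B[symmetric])
  qed
  have pD: "\<forall>X\<in>\<Sigma>N. (\<Sum>i\<in>UNIV. \<Sum>k\<in>UNIV. dv$i * tau$k * (\<phi> i X \<bullet> \<xi> k X)) = field dv \<phi> X \<bullet> field tau \<xi> X"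
  proof
    fix X show "(\<Sum>i\<in>UNIV. \<Sum>k\<in>UNIV. dv$i * tau$k * (\<phi> i X \<bullet> \<xi> k X)) = field dv \<phi> X \<bullet> field tau \<xi> X"
      by (rule exp_inner[symmetric])
  qed
  have IA: "set_integrable lborel \<Omega> (\<lambda>X. field dv \<phi> X \<bullet> (\<rho>0 *\<^sub>R field vd \<phi> X))"
    by (rule sint_integrable_cong[OF pA int_bilin(1)[OF j1]])
  have VA: "set_lebesgue_integral lborel \<Omega> (\<lambda>X. field dv \<phi> X \<bullet> (\<rho>0 *\<^sub>R field vd \<phi> X)) = dv \<bullet> (Mv \<rho>0 \<Omega> \<phi> *v vd)"
    unfolding sint_cong[OF pA, symmetric] int_bilin(2)[OF j1] Mv_def inner_mat_vec ..
  have IB: "set_integrable lborel \<Omega> (\<lambda>X. ddot (transpose (Grad (field dv \<phi>) X) ** field F \<theta> X) (field S \<psi> X))"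
    by (rule sint_integrable_cong[OF pB int_bilin(1)[OF j5]])
  have VB: "set_lebesgue_integral lborel \<Omega> (\<lambda>X. ddot (transpose (Grad (field dv \<phi>) X) ** field F \<theta> X) (field S \<psi> X))
      = dv \<bullet> (KOm \<Omega> \<phi> \<psi> \<theta> F *v S)"
    unfolding sint_cong[OF pB, symmetric] int_bilin(2)[OF j5] KOm_def inner_mat_vec lO ..
  have VC: "set_lebesgue_integral \<sigma> \<Sigma>D (\<lambda>X. field dv \<phi> X \<bullet> ((field F \<theta> X ** field S \<psi> X) *v N X))
      = dv \<bullet> (KSm \<Sigma>D \<sigma> N \<phi> \<psi> \<theta> F *v S)"
    unfolding sint_cong[OF pC, symmetric] int_bilin(2)[OF j6] KSm_def inner_mat_vec lS ..
  have VD: "set_lebesgue_integral \<sigma> \<Sigma>N (\<lambda>X. field dv \<phi> X \<bullet> field tau \<xi> X) = dv \<bullet> (Gtau \<Sigma>N \<sigma> \<phi> \<xi> *v tau)"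
    unfolding sint_cong[OF pD, symmetric] int_bilin(2)[OF i7] Gtau_def inner_mat_vec ..
  show ?thesis
    unfolding set_integral_add(2)[OF IA IB] VA VB VC VD Kmat_split[OF i5 i6]
    by (simp add: inner_add_right inner_diff_right matrix_vector_mult_diff_rdistrib)
qed

lemma inner_transpose_mv: "(x::real^'m) \<bullet> (transpose A *v (y::real^'n)) = y \<bullet> (A *v x)"
  by (simp add: transpose_matrix_vector inner_commute[of x] dot_lmul_matrix)

lemma transpose_diff': "transpose ((A::real^'n^'m) - B) = transpose A - transpose B"
  by (simp add: vec_eq_iff transpose_def)

lemma mv_uminus: "(- (A::real^'n^'m)) *v x = - (A *v x)"
  by (simp add: vec_eq_iff matrix_vector_mult_def sum_negf)

lemma bil_comb:
  fixes a :: "'i::finite \<Rightarrow> real" and b :: "'j::finite \<Rightarrow> real"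
  shows "k * ((\<Sum>i\<in>UNIV. \<Sum>j\<in>UNIV. a i * b j * p i j) - c * (\<Sum>i\<in>UNIV. a i * s i) * (\<Sum>j\<in>UNIV. b j * r j))
       = (\<Sum>i\<in>UNIV. \<Sum>j\<in>UNIV. a i * b j * (k * (p i j - c * s i * r j)))"
proof -
  have "(\<Sum>i\<in>UNIV. a i * s i) * (\<Sum>j\<in>UNIV. b j * r j) = (\<Sum>i\<in>UNIV. \<Sum>j\<in>UNIV. a i * s i * (b j * r j))"
    by (rule sum_product)
  then show ?thesis
    by (simp add: mult.assoc sum_distrib_left sum_subtractf[symmetric] algebra_simps)
qed

lemma ddot_elast_field:
  fixes \<psi> :: "'s::finite \<Rightarrow> real^3 \<Rightarrow> real^3^3"
  assumes mu: "\<mu> > 0" and lm: "3 * lam + 2 * \<mu> > 0" and sym: "\<forall>j X. transpose (\<psi> j X) = \<psi> j X"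
  shows "ddot (field a \<psi> X) (elast_inv \<mu> lam (field b \<psi> X)) =
     (\<Sum>j\<in>UNIV. \<Sum>j'\<in>UNIV. a$j * b$j' * ddot (\<psi> j X) (elast_inv \<mu> lam (\<psi> j' X)))"
proof -
  have e1: "elast_inv \<mu> lam (field b \<psi> X) = einv \<mu> lam (field b \<psi> X)"
    by (rule elast_inv_eq[OF mu lm field_sym[OF sym]])
  have e2: "elast_inv \<mu> lam (\<psi> j' X) = einv \<mu> lam (\<psi> j' X)" for j'
    using elast_inv_eq[OF mu lm] sym by blast
  have tr: "trace (field c \<psi> X) = (\<Sum>j\<in>UNIV. c$j * trace (\<psi> j X))" for c
    unfolding field_def by (rule trace_sum_scale)
  show ?thesis
    unfolding e1 e2 ddot_einv tr exp_inner
    by (rule bil_comb)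
qed

lemma weak2:
  fixes \<phi> :: "'v::finite \<Rightarrow> real^3 \<Rightarrow> real^3" and \<psi> :: "'s::finite \<Rightarrow> real^3 \<Rightarrow> real^3^3"
    and \<theta> :: "'f::finite \<Rightarrow> real^3 \<Rightarrow> real^3^3" and \<zeta> :: "'m::finite \<Rightarrow> real^3 \<Rightarrow> real^3"
  assumes d: "\<forall>X\<in>\<Omega>. \<forall>i. \<phi> i differentiable (at X)"
    and mu: "\<mu> > 0" and lm: "3 * lam + 2 * \<mu> > 0" and sym: "\<forall>j X. transpose (\<psi> j X) = \<psi> j X"
    and i2: "\<forall>j j'. set_integrable lborel \<Omega> (\<lambda>X. ddot (\<psi> j X) (elast_inv \<mu> lam (\<psi> j' X)))"
    and i5: "\<forall>i l j. set_integrable lborel \<Omega> (\<lambda>X. ddot (transpose (Grad (\<phi> i) X) ** \<theta> l X) (\<psi> j X))"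
    and i6: "\<forall>i l j. set_integrable \<sigma> \<Sigma>D (\<lambda>X. \<phi> i X \<bullet> ((\<theta> l X ** \<psi> j X) *v N X))"
    and i8: "\<forall>l j m. set_integrable \<sigma> \<Sigma>D (\<lambda>X. ((\<theta> l X ** \<psi> j X) *v N X) \<bullet> \<zeta> m X)"
  shows "set_lebesgue_integral lborel \<Omega> (\<lambda>X.
                ddot (field dS \<psi> X) (elast_inv \<mu> lam (field Sd \<psi> X))
              - ddot (field dS \<psi> X) (transpose (field F \<theta> X) ** Grad (field v \<phi>) X))
            + set_lebesgue_integral \<sigma> \<Sigma>D (\<lambda>X.
                ((field F \<theta> X ** field dS \<psi> X) *v N X) \<bullet> field v \<phi> X)
            - set_lebesgue_integral \<sigma> \<Sigma>D (\<lambda>X.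
                ((field F \<theta> X ** field dS \<psi> X) *v N X) \<bullet> field nu \<zeta> X)
     = dS \<bullet> (MS \<mu> lam \<Omega> \<psi> *v Sd - transpose (Kmat \<Omega> \<Sigma>D \<sigma> N \<phi> \<psi> \<theta> F) *v v - Gnu \<Sigma>D \<sigma> N \<psi> \<theta> \<zeta> F *v nu)"
proof -
  have j5: "\<forall>i j. set_integrable lborel \<Omega> (\<lambda>X. \<Sum>l\<in>UNIV. F$l * ddot (transpose (Grad (\<phi> i) X) ** \<theta> l X) (\<psi> j X))"
  proof (intro allI)
    fix i j
    have "\<forall>l. set_integrable lborel \<Omega> (\<lambda>X. ddot (transpose (Grad (\<phi> i) X) ** \<theta> l X) (\<psi> j X))" using i5 by blast
    then show "set_integrable lborel \<Omega> (\<lambda>X. \<Sum>l\<in>UNIV. F$l * ddot (transpose (Grad (\<phi> i) X) ** \<theta> l X) (\<psi> j X))"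
      by (rule int_lin(1))
  qed
  have j6: "\<forall>i j. set_integrable \<sigma> \<Sigma>D (\<lambda>X. \<Sum>l\<in>UNIV. F$l * (\<phi> i X \<bullet> ((\<theta> l X ** \<psi> j X) *v N X)))"
  proof (intro allI)
    fix i j
    have "\<forall>l. set_integrable \<sigma> \<Sigma>D (\<lambda>X. \<phi> i X \<bullet> ((\<theta> l X ** \<psi> j X) *v N X))" using i6 by blast
    then show "set_integrable \<sigma> \<Sigma>D (\<lambda>X. \<Sum>l\<in>UNIV. F$l * (\<phi> i X \<bullet> ((\<theta> l X ** \<psi> j X) *v N X)))"
      by (rule int_lin(1))
  qed
  have j8: "\<forall>j m. set_integrable \<sigma> \<Sigma>D (\<lambda>X. ((field F \<theta> X ** \<psi> j X) *v N X) \<bullet> \<zeta> m X)"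
  proof (intro allI)
    fix j m
    have "\<forall>l. set_integrable \<sigma> \<Sigma>D (\<lambda>X. ((\<theta> l X ** \<psi> j X) *v N X) \<bullet> \<zeta> m X)" using i8 by blast
    then have si: "set_integrable \<sigma> \<Sigma>D (\<lambda>X. \<Sum>l\<in>UNIV. F$l * (((\<theta> l X ** \<psi> j X) *v N X) \<bullet> \<zeta> m X))"
      by (rule int_lin(1))
    have eq: "\<forall>X\<in>\<Sigma>D. (\<Sum>l\<in>UNIV. F$l * (((\<theta> l X ** \<psi> j X) *v N X) \<bullet> \<zeta> m X)) = ((field F \<theta> X ** \<psi> j X) *v N X) \<bullet> \<zeta> m X"
    proof
      fix X show "(\<Sum>l\<in>UNIV. F$l * (((\<theta> l X ** \<psi> j X) *v N X) \<bullet> \<zeta> m X)) = ((field F \<theta> X ** \<psi> j X) *v N X) \<bullet> \<zeta> m X"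
        unfolding field_def matmul_sum_left mvmul_sum_left by (simp add: inner_sum_left)
    qed
    show "set_integrable \<sigma> \<Sigma>D (\<lambda>X. ((field F \<theta> X ** \<psi> j X) *v N X) \<bullet> \<zeta> m X)"
      by (rule sint_integrable_cong[OF eq si])
  qed
  have lO: "set_lebesgue_integral lborel \<Omega> (\<lambda>X. \<Sum>l\<in>UNIV. F$l * ddot (transpose (Grad (\<phi> i) X) ** \<theta> l X) (\<psi> j X))
     = (\<Sum>l\<in>UNIV. F$l * set_lebesgue_integral lborel \<Omega> (\<lambda>X. ddot (transpose (Grad (\<phi> i) X) ** \<theta> l X) (\<psi> j X)))" for i j
  proof -
    have "\<forall>l. set_integrable lborel \<Omega> (\<lambda>X. ddot (transpose (Grad (\<phi> i) X) ** \<theta> l X) (\<psi> j X))" using i5 by blast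
    then show ?thesis by (rule int_lin(2))
  qed
  have lS: "set_lebesgue_integral \<sigma> \<Sigma>D (\<lambda>X. \<Sum>l\<in>UNIV. F$l * (\<phi> i X \<bullet> ((\<theta> l X ** \<psi> j X) *v N X)))
     = (\<Sum>l\<in>UNIV. F$l * set_lebesgue_integral \<sigma> \<Sigma>D (\<lambda>X. \<phi> i X \<bullet> ((\<theta> l X ** \<psi> j X) *v N X)))" for i j
  proof -
    have "\<forall>l. set_integrable \<sigma> \<Sigma>D (\<lambda>X. \<phi> i X \<bullet> ((\<theta> l X ** \<psi> j X) *v N X))" using i6 by blast
    then show ?thesis by (rule int_lin(2))
  qed
  have pA: "\<forall>X\<in>\<Omega>. (\<Sum>j\<in>UNIV. \<Sum>j'\<in>UNIV. dS$j * Sd$j' * ddot (\<psi> j X) (elast_inv \<mu> lam (\<psi> j' X)))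
      = ddot (field dS \<psi> X) (elast_inv \<mu> lam (field Sd \<psi> X))"
  proof
    fix X show "(\<Sum>j\<in>UNIV. \<Sum>j'\<in>UNIV. dS$j * Sd$j' * ddot (\<psi> j X) (elast_inv \<mu> lam (\<psi> j' X)))
      = ddot (field dS \<psi> X) (elast_inv \<mu> lam (field Sd \<psi> X))"
      by (rule ddot_elast_field[OF mu lm sym, symmetric])
  qed
  have pB: "\<forall>X\<in>\<Omega>. (\<Sum>i\<in>UNIV. \<Sum>j\<in>UNIV. v$i * dS$j * (\<Sum>l\<in>UNIV. F$l * ddot (transpose (Grad (\<phi> i) X) ** \<theta> l X) (\<psi> j X)))
      = ddot (field dS \<psi> X) (transpose (field F \<theta> X) ** Grad (field v \<phi>) X)"
  proof
    fix X assume "X \<in> \<Omega>"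
    then have "\<forall>i. \<phi> i differentiable (at X)" using d by blast
    then show "(\<Sum>i\<in>UNIV. \<Sum>j\<in>UNIV. v$i * dS$j * (\<Sum>l\<in>UNIV. F$l * ddot (transpose (Grad (\<phi> i) X) ** \<theta> l X) (\<psi> j X)))
      = ddot (field dS \<psi> X) (transpose (field F \<theta> X) ** Grad (field v \<phi>) X)"
      unfolding ddot_sym_swap[OF field_sym[OF sym]] by (rule exp_K[symmetric])
  qed
  have pC: "\<forall>X\<in>\<Sigma>D. (\<Sum>i\<in>UNIV. \<Sum>j\<in>UNIV. v$i * dS$j * (\<Sum>l\<in>UNIV. F$l * (\<phi> i X \<bullet> ((\<theta> l X ** \<psi> j X) *v N X))))
      = ((field F \<theta> X ** field dS \<psi> X) *v N X) \<bullet> field v \<phi> X"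
  proof
    fix X show "(\<Sum>i\<in>UNIV. \<Sum>j\<in>UNIV. v$i * dS$j * (\<Sum>l\<in>UNIV. F$l * (\<phi> i X \<bullet> ((\<theta> l X ** \<psi> j X) *v N X))))
      = ((field F \<theta> X ** field dS \<psi> X) *v N X) \<bullet> field v \<phi> X"
      unfolding inner_commute[of _ "field v \<phi> X"] by (rule exp_B[symmetric])
  qed
  have pD: "\<forall>X\<in>\<Sigma>D. (\<Sum>j\<in>UNIV. \<Sum>m\<in>UNIV. dS$j * nu$m * (((field F \<theta> X ** \<psi> j X) *v N X) \<bullet> \<zeta> m X))
      = ((field F \<theta> X ** field dS \<psi> X) *v N X) \<bullet> field nu \<zeta> X"
  proof
    fix X show "(\<Sum>j\<in>UNIV. \<Sum>m\<in>UNIV. dS$j * nu$m * (((field F \<theta> X ** \<psi> j X) *v N X) \<bullet> \<zeta> m X))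
      = ((field F \<theta> X ** field dS \<psi> X) *v N X) \<bullet> field nu \<zeta> X"
      by (rule exp_G[symmetric])
  qed
  have IA: "set_integrable lborel \<Omega> (\<lambda>X. ddot (field dS \<psi> X) (elast_inv \<mu> lam (field Sd \<psi> X)))"
    by (rule sint_integrable_cong[OF pA int_bilin(1)[OF i2]])
  have VA: "set_lebesgue_integral lborel \<Omega> (\<lambda>X. ddot (field dS \<psi> X) (elast_inv \<mu> lam (field Sd \<psi> X))) = dS \<bullet> (MS \<mu> lam \<Omega> \<psi> *v Sd)"
    unfolding sint_cong[OF pA, symmetric] int_bilin(2)[OF i2] MS_def inner_mat_vec ..
  have IB: "set_integrable lborel \<Omega> (\<lambda>X. ddot (field dS \<psi> X) (transpose (field F \<theta> X) ** Grad (field v \<phi>) X))"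
    by (rule sint_integrable_cong[OF pB int_bilin(1)[OF j5]])
  have VB: "set_lebesgue_integral lborel \<Omega> (\<lambda>X. ddot (field dS \<psi> X) (transpose (field F \<theta> X) ** Grad (field v \<phi>) X))
      = dS \<bullet> (transpose (KOm \<Omega> \<phi> \<psi> \<theta> F) *v v)"
    unfolding sint_cong[OF pB, symmetric] int_bilin(2)[OF j5] KOm_def inner_tmat_vec lO ..
  have VC: "set_lebesgue_integral \<sigma> \<Sigma>D (\<lambda>X. ((field F \<theta> X ** field dS \<psi> X) *v N X) \<bullet> field v \<phi> X)
      = dS \<bullet> (transpose (KSm \<Sigma>D \<sigma> N \<phi> \<psi> \<theta> F) *v v)"
    unfolding sint_cong[OF pC, symmetric] int_bilin(2)[OF j6] KSm_def inner_tmat_vec lS ..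
  have VD: "set_lebesgue_integral \<sigma> \<Sigma>D (\<lambda>X. ((field F \<theta> X ** field dS \<psi> X) *v N X) \<bullet> field nu \<zeta> X)
      = dS \<bullet> (Gnu \<Sigma>D \<sigma> N \<psi> \<theta> \<zeta> F *v nu)"
    unfolding sint_cong[OF pD, symmetric] int_bilin(2)[OF j8] Gnu_def inner_mat_vec ..
  show ?thesis
    unfolding set_integral_diff(2)[OF IA IB] VA VB VC VD Kmat_split[OF i5 i6] transpose_diff'
    by (simp add: inner_add_right inner_diff_right matrix_vector_mult_diff_rdistrib)
qed

lemma weak3:
  fixes \<phi> :: "'v::finite \<Rightarrow> real^3 \<Rightarrow> real^3" and \<theta> :: "'f::finite \<Rightarrow> real^3 \<Rightarrow> real^3^3"
  assumes d: "\<forall>X\<in>\<Omega>. \<forall>i. \<phi> i differentiable (at X)"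
    and i3: "\<forall>l l'. set_integrable lborel \<Omega> (\<lambda>X. ddot (\<theta> l X) (\<theta> l' X))"
    and i4: "\<forall>l i. set_integrable lborel \<Omega> (\<lambda>X. ddot (\<theta> l X) (Grad (\<phi> i) X))"
  shows "set_lebesgue_integral lborel \<Omega> (\<lambda>X.
                ddot (field dT \<theta> X) (field Fd \<theta> X)
              - ddot (field dT \<theta> X) (Grad (field v \<phi>) X))
     = dT \<bullet> (MF \<Omega> \<theta> *v Fd - Zmat \<Omega> \<phi> \<theta> *v v)"
proof -
  have pA: "\<forall>X\<in>\<Omega>. (\<Sum>l\<in>UNIV. \<Sum>l'\<in>UNIV. dT$l * Fd$l' * ddot (\<theta> l X) (\<theta> l' X))
      = ddot (field dT \<theta> X) (field Fd \<theta> X)"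
  proof
    fix X show "(\<Sum>l\<in>UNIV. \<Sum>l'\<in>UNIV. dT$l * Fd$l' * ddot (\<theta> l X) (\<theta> l' X))
      = ddot (field dT \<theta> X) (field Fd \<theta> X)"
      unfolding ddot_inner by (rule exp_inner[symmetric])
  qed
  have pB: "\<forall>X\<in>\<Omega>. (\<Sum>l\<in>UNIV. \<Sum>i\<in>UNIV. dT$l * v$i * ddot (\<theta> l X) (Grad (\<phi> i) X))
      = ddot (field dT \<theta> X) (Grad (field v \<phi>) X)"
  proof
    fix X assume "X \<in> \<Omega>"
    then have dX: "\<forall>i. \<phi> i differentiable (at X)" using d by blast
    have g: "Grad (field v \<phi>) X = field v (\<lambda>i. Grad (\<phi> i)) X"
      using Grad_field[OF dX] by (simp add: field_def[of v "\<lambda>i. Grad (\<phi> i)"])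
    show "(\<Sum>l\<in>UNIV. \<Sum>i\<in>UNIV. dT$l * v$i * ddot (\<theta> l X) (Grad (\<phi> i) X))
      = ddot (field dT \<theta> X) (Grad (field v \<phi>) X)"
      unfolding g ddot_inner exp_inner ..
  qed
  have IA: "set_integrable lborel \<Omega> (\<lambda>X. ddot (field dT \<theta> X) (field Fd \<theta> X))"
    by (rule sint_integrable_cong[OF pA int_bilin(1)[OF i3]])
  have VA: "set_lebesgue_integral lborel \<Omega> (\<lambda>X. ddot (field dT \<theta> X) (field Fd \<theta> X)) = dT \<bullet> (MF \<Omega> \<theta> *v Fd)"
    unfolding sint_cong[OF pA, symmetric] int_bilin(2)[OF i3] MF_def inner_mat_vec ..
  have IB: "set_integrable lborel \<Omega> (\<lambda>X. ddot (field dT \<theta> X) (Grad (field v \<phi>) X))"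
    by (rule sint_integrable_cong[OF pB int_bilin(1)[OF i4]])
  have VB: "set_lebesgue_integral lborel \<Omega> (\<lambda>X. ddot (field dT \<theta> X) (Grad (field v \<phi>) X)) = dT \<bullet> (Zmat \<Omega> \<phi> \<theta> *v v)"
    unfolding sint_cong[OF pB, symmetric] int_bilin(2)[OF i4] Zmat_def inner_mat_vec ..
  show ?thesis
    unfolding set_integral_diff(2)[OF IA IB] VA VB by (simp add: inner_diff_right)
qed

lemma quad_Mv:
  fixes \<phi> :: "'v::finite \<Rightarrow> real^3 \<Rightarrow> real^3"
  assumes i1: "\<forall>i i'. set_integrable lborel \<Omega> (\<lambda>X. \<phi> i X \<bullet> \<phi> i' X)"
  shows "set_integrable lborel \<Omega> (\<lambda>X. field a \<phi> X \<bullet> (\<rho>0 *\<^sub>R field b \<phi> X))"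
    "a \<bullet> (Mv \<rho>0 \<Omega> \<phi> *v b) = set_lebesgue_integral lborel \<Omega> (\<lambda>X. field a \<phi> X \<bullet> (\<rho>0 *\<^sub>R field b \<phi> X))"
proof -
  have j1: "\<forall>i i'. set_integrable lborel \<Omega> (\<lambda>X. \<rho>0 * (\<phi> i X \<bullet> \<phi> i' X))"
  proof (intro allI)
    fix i i'
    have "set_integrable lborel \<Omega> (\<lambda>X. \<phi> i X \<bullet> \<phi> i' X)" using i1 by blast
    then show "set_integrable lborel \<Omega> (\<lambda>X. \<rho>0 * (\<phi> i X \<bullet> \<phi> i' X))"
      by (rule set_integrable_mult_right)
  qed
  have pA: "\<forall>X\<in>\<Omega>. (\<Sum>i\<in>UNIV. \<Sum>j\<in>UNIV. a$i * b$j * (\<rho>0 * (\<phi> i X \<bullet> \<phi> j X))) = field a \<phi> X \<bullet> (\<rho>0 *\<^sub>R field b \<phi> X)"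
    unfolding inner_scaleR_right exp_inner by (simp add: sum_distrib_left ac_simps)
  show "set_integrable lborel \<Omega> (\<lambda>X. field a \<phi> X \<bullet> (\<rho>0 *\<^sub>R field b \<phi> X))"
    by (rule sint_integrable_cong[OF pA int_bilin(1)[OF j1]])
  show "a \<bullet> (Mv \<rho>0 \<Omega> \<phi> *v b) = set_lebesgue_integral lborel \<Omega> (\<lambda>X. field a \<phi> X \<bullet> (\<rho>0 *\<^sub>R field b \<phi> X))"
    unfolding sint_cong[OF pA, symmetric] int_bilin(2)[OF j1] Mv_def inner_mat_vec ..
qed

lemma quad_MS:
  fixes \<psi> :: "'s::finite \<Rightarrow> real^3 \<Rightarrow> real^3^3"
  assumes mu: "\<mu> > 0" and lm: "3 * lam + 2 * \<mu> > 0" and sym: "\<forall>j X. transpose (\<psi> j X) = \<psi> j X"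
    and i2: "\<forall>j j'. set_integrable lborel \<Omega> (\<lambda>X. ddot (\<psi> j X) (elast_inv \<mu> lam (\<psi> j' X)))"
  shows "set_integrable lborel \<Omega> (\<lambda>X. ddot (field a \<psi> X) (elast_inv \<mu> lam (field b \<psi> X)))"
    "a \<bullet> (MS \<mu> lam \<Omega> \<psi> *v b) = set_lebesgue_integral lborel \<Omega> (\<lambda>X. ddot (field a \<psi> X) (elast_inv \<mu> lam (field b \<psi> X)))"
proof -
  have pA: "\<forall>X\<in>\<Omega>. (\<Sum>j\<in>UNIV. \<Sum>j'\<in>UNIV. a$j * b$j' * ddot (\<psi> j X) (elast_inv \<mu> lam (\<psi> j' X)))
      = ddot (field a \<psi> X) (elast_inv \<mu> lam (field b \<psi> X))"
  proof
    fix X show "(\<Sum>j\<in>UNIV. \<Sum>j'\<in>UNIV. a$j * b$j' * ddot (\<psi> j X) (elast_inv \<mu> lam (\<psi> j' X)))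
      = ddot (field a \<psi> X) (elast_inv \<mu> lam (field b \<psi> X))"
      by (rule ddot_elast_field[OF mu lm sym, symmetric])
  qed
  show "set_integrable lborel \<Omega> (\<lambda>X. ddot (field a \<psi> X) (elast_inv \<mu> lam (field b \<psi> X)))"
    by (rule sint_integrable_cong[OF pA int_bilin(1)[OF i2]])
  show "a \<bullet> (MS \<mu> lam \<Omega> \<psi> *v b) = set_lebesgue_integral lborel \<Omega> (\<lambda>X. ddot (field a \<psi> X) (elast_inv \<mu> lam (field b \<psi> X)))"
    unfolding sint_cong[OF pA, symmetric] int_bilin(2)[OF i2] MS_def inner_mat_vec ..
qed

lemma quad_MF:
  fixes \<theta> :: "'f::finite \<Rightarrow> real^3 \<Rightarrow> real^3^3"
  assumes i3: "\<forall>l l'. set_integrable lborel \<Omega> (\<lambda>X. ddot (\<theta> l X) (\<theta> l' X))"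
  shows "set_integrable lborel \<Omega> (\<lambda>X. ddot (field a \<theta> X) (field b \<theta> X))"
    "a \<bullet> (MF \<Omega> \<theta> *v b) = set_lebesgue_integral lborel \<Omega> (\<lambda>X. ddot (field a \<theta> X) (field b \<theta> X))"
proof -
  have pA: "\<forall>X\<in>\<Omega>. (\<Sum>l\<in>UNIV. \<Sum>l'\<in>UNIV. a$l * b$l' * ddot (\<theta> l X) (\<theta> l' X))
      = ddot (field a \<theta> X) (field b \<theta> X)"
  proof
    fix X show "(\<Sum>l\<in>UNIV. \<Sum>l'\<in>UNIV. a$l * b$l' * ddot (\<theta> l X) (\<theta> l' X))
      = ddot (field a \<theta> X) (field b \<theta> X)"
      unfolding ddot_inner by (rule exp_inner[symmetric])
  qed
  show "set_integrable lborel \<Omega> (\<lambda>X. ddot (field a \<theta> X) (field b \<theta> X))"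
    by (rule sint_integrable_cong[OF pA int_bilin(1)[OF i3]])
  show "a \<bullet> (MF \<Omega> \<theta> *v b) = set_lebesgue_integral lborel \<Omega> (\<lambda>X. ddot (field a \<theta> X) (field b \<theta> X))"
    unfolding sint_cong[OF pA, symmetric] int_bilin(2)[OF i3] MF_def inner_mat_vec ..
qed

lemma indep_ex:
  assumes "lin_indep_on \<Omega> b" "a \<noteq> 0"
  shows "\<exists>X\<in>\<Omega>. field a b X \<noteq> 0"
proof (rule ccontr)
  assume "\<not> (\<exists>X\<in>\<Omega>. field a b X \<noteq> 0)"
  then have "\<forall>X\<in>\<Omega>. (\<Sum>i\<in>UNIV. a$i *\<^sub>R b i X) = 0" by (simp add: field_def)
  then have "\<forall>i. a$i = 0" using assms(1) unfolding lin_indep_on_def by blast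
  then show False using assms(2) by (simp add: vec_eq_iff)
qed

lemma cont_field:
  fixes b :: "'i::finite \<Rightarrow> 'x::topological_space \<Rightarrow> 'y::real_normed_vector"
  assumes "\<forall>i. continuous_on \<Omega> (b i)"
  shows "continuous_on \<Omega> (field a b)"
proof -
  have "continuous_on \<Omega> (\<lambda>X. \<Sum>i\<in>UNIV. a$i *\<^sub>R b i X)"
    using assms by (intro continuous_on_sum continuous_on_scaleR continuous_on_const) auto
  then show ?thesis unfolding field_def[abs_def] .
qed

lemma pos_Mv:
  fixes \<phi> :: "'v::finite \<Rightarrow> real^3 \<Rightarrow> real^3"
  assumes op: "open \<Omega>" and rho: "\<rho>0 > 0" and c: "\<forall>i. continuous_on \<Omega> (\<phi> i)"
    and li: "lin_indep_on \<Omega> \<phi>"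
    and i1: "\<forall>i i'. set_integrable lborel \<Omega> (\<lambda>X. \<phi> i X \<bullet> \<phi> i' X)"
    and a: "a \<noteq> 0"
  shows "a \<bullet> (Mv \<rho>0 \<Omega> \<phi> *v a) > 0"
proof -
  obtain X0 where X0: "X0 \<in> \<Omega>" "field a \<phi> X0 \<noteq> 0" using indep_ex[OF li a] by blast
  have cf: "continuous_on \<Omega> (field a \<phi>)" by (rule cont_field[OF c])
  have "0 < set_lebesgue_integral lborel \<Omega> (\<lambda>X. field a \<phi> X \<bullet> (\<rho>0 *\<^sub>R field a \<phi> X))"
  proof (rule pos_int[OF op _ _ X0(1) _ quad_Mv(1)[OF i1]])
    show "continuous_on \<Omega> (\<lambda>X. field a \<phi> X \<bullet> (\<rho>0 *\<^sub>R field a \<phi> X))"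
      using cf by (intro continuous_intros)
    show "\<forall>x\<in>\<Omega>. 0 \<le> field a \<phi> x \<bullet> (\<rho>0 *\<^sub>R field a \<phi> x)" using rho by simp
    show "0 < field a \<phi> X0 \<bullet> (\<rho>0 *\<^sub>R field a \<phi> X0)" using rho X0(2) by simp
  qed
  then show ?thesis unfolding quad_Mv(2)[OF i1] .
qed

lemma pos_MF:
  fixes \<theta> :: "'f::finite \<Rightarrow> real^3 \<Rightarrow> real^3^3"
  assumes op: "open \<Omega>" and c: "\<forall>i. continuous_on \<Omega> (\<theta> i)"
    and li: "lin_indep_on \<Omega> \<theta>"
    and i3: "\<forall>l l'. set_integrable lborel \<Omega> (\<lambda>X. ddot (\<theta> l X) (\<theta> l' X))"
    and a: "a \<noteq> 0"
  shows "a \<bullet> (MF \<Omega> \<theta> *v a) > 0"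
proof -
  obtain X0 where X0: "X0 \<in> \<Omega>" "field a \<theta> X0 \<noteq> 0" using indep_ex[OF li a] by blast
  have cf: "continuous_on \<Omega> (field a \<theta>)" by (rule cont_field[OF c])
  have "0 < set_lebesgue_integral lborel \<Omega> (\<lambda>X. ddot (field a \<theta> X) (field a \<theta> X))"
  proof (rule pos_int[OF op _ _ X0(1) _ quad_MF(1)[OF i3]])
    show "continuous_on \<Omega> (\<lambda>X. ddot (field a \<theta> X) (field a \<theta> X))"
      unfolding ddot_inner using cf by (intro continuous_intros)
    show "\<forall>x\<in>\<Omega>. 0 \<le> ddot (field a \<theta> x) (field a \<theta> x)" by (simp add: ddot_inner)
    show "0 < ddot (field a \<theta> X0) (field a \<theta> X0)" using X0(2) by (simp add: ddot_inner)
  qed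
  then show ?thesis unfolding quad_MF(2)[OF i3] .
qed

lemma pos_MS:
  fixes \<psi> :: "'s::finite \<Rightarrow> real^3 \<Rightarrow> real^3^3"
  assumes op: "open \<Omega>" and mu: "\<mu> > 0" and lm: "3 * lam + 2 * \<mu> > 0"
    and sym: "\<forall>j X. transpose (\<psi> j X) = \<psi> j X"
    and c: "\<forall>i. continuous_on \<Omega> (\<psi> i)"
    and li: "lin_indep_on \<Omega> \<psi>"
    and i2: "\<forall>j j'. set_integrable lborel \<Omega> (\<lambda>X. ddot (\<psi> j X) (elast_inv \<mu> lam (\<psi> j' X)))"
    and a: "a \<noteq> 0"
  shows "a \<bullet> (MS \<mu> lam \<Omega> \<psi> *v a) > 0"
proof -
  obtain X0 where X0: "X0 \<in> \<Omega>" "field a \<psi> X0 \<noteq> 0" using indep_ex[OF li a] by blast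
  have cf: "continuous_on \<Omega> (field a \<psi>)" by (rule cont_field[OF c])
  have ee: "ddot (field a \<psi> X) (elast_inv \<mu> lam (field a \<psi> X)) = ddot (field a \<psi> X) (einv \<mu> lam (field a \<psi> X))" for X
    using elast_inv_eq[OF mu lm field_sym[OF sym]] by simp
  have ctr: "continuous_on \<Omega> (\<lambda>X. trace (field a \<psi> X))"
    unfolding trace_def using cf by (intro continuous_intros)
  have "0 < set_lebesgue_integral lborel \<Omega> (\<lambda>X. ddot (field a \<psi> X) (elast_inv \<mu> lam (field a \<psi> X)))"
  proof (rule pos_int[OF op _ _ X0(1) _ quad_MS(1)[OF mu lm sym i2]])
    show "continuous_on \<Omega> (\<lambda>X. ddot (field a \<psi> X) (elast_inv \<mu> lam (field a \<psi> X)))"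
      unfolding ee ddot_einv using cf ctr by (intro continuous_intros)
    show "\<forall>x\<in>\<Omega>. 0 \<le> ddot (field a \<psi> x) (elast_inv \<mu> lam (field a \<psi> x))"
      unfolding ee using einv_pos(1)[OF mu lm] by simp
    show "0 < ddot (field a \<psi> X0) (elast_inv \<mu> lam (field a \<psi> X0))"
      unfolding ee using einv_pos(2)[OF mu lm X0(2)] .
  qed
  then show ?thesis unfolding quad_MS(2)[OF mu lm sym i2] .
qed

lemma sym_MS:
  fixes \<psi> :: "'s::finite \<Rightarrow> real^3 \<Rightarrow> real^3^3"
  assumes mu: "\<mu> > 0" and lm: "3 * lam + 2 * \<mu> > 0" and sym: "\<forall>j X. transpose (\<psi> j X) = \<psi> j X"
  shows "transpose (MS \<mu> lam \<Omega> \<psi>) = MS \<mu> lam \<Omega> \<psi>"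
proof -
  have e: "ddot (\<psi> j X) (elast_inv \<mu> lam (\<psi> j' X)) = ddot (\<psi> j' X) (elast_inv \<mu> lam (\<psi> j X))" for j j' X
  proof -
    have "elast_inv \<mu> lam (\<psi> k X) = einv \<mu> lam (\<psi> k X)" for k
      using elast_inv_eq[OF mu lm] sym by blast
    then show ?thesis by (simp add: ddot_einv inner_commute mult_ac)
  qed
  show ?thesis
    unfolding MS_def by (simp add: vec_eq_iff transpose_def e)
qed

lemma sym_Mv: "transpose (Mv \<rho>0 \<Omega> \<phi>) = Mv \<rho>0 \<Omega> \<phi>"
  unfolding Mv_def by (simp add: vec_eq_iff transpose_def inner_commute)

lemma sym_MF: "transpose (MF \<Omega> \<theta>) = MF \<Omega> \<theta>"
  unfolding MF_def by (simp add: vec_eq_iff transpose_def ddot_inner inner_commute)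

lemma block_eq_iff:
  "(block33 A 0 0 0 B 0 0 0 C *v stack3 v' S' F'
     = block33 0 (- K) (- transpose Z) (transpose K) 0 0 Z 0 0 *v stack3 v S (0::real^'f)
       + block32 G 0 0 H 0 0 *v stack2 tau nu)
   \<longleftrightarrow> (A *v v' + K *v S - G *v tau = 0 \<and> B *v S' - transpose K *v v - H *v nu = 0
        \<and> C *v (F'::real^'f) - Z *v v = 0)"
  by (simp add: block33_mult block32_mult stack3_add stack3_eq_iff mv_uminus algebra_simps)

lemma all_inner_zero:
  "(\<forall>(a::real^'a) (b::real^'b) (c::real^'c). a \<bullet> R1 = 0 \<and> b \<bullet> R2 = 0 \<and> c \<bullet> R3 = 0) \<longleftrightarrow> (R1 = 0 \<and> R2 = 0 \<and> R3 = 0)"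
  by (metis inner_eq_zero_iff inner_zero_right)

lemma power_bal:
  fixes vh :: "real \<Rightarrow> real^'v" and Sh :: "real \<Rightarrow> real^'s"
  assumes sA: "transpose A = A" and sB: "transpose B = B"
    and dv: "vh differentiable (at t)" and dS: "Sh differentiable (at t)"
    and e1: "A *v vector_derivative vh (at t) = - (K *v Sh t) + G *v tau"
    and e2: "B *v vector_derivative Sh (at t) = transpose K *v vh t + H *v nu"
  shows "((\<lambda>s. (1/2) * (vh s \<bullet> (A *v vh s)) + (1/2) * (Sh s \<bullet> (B *v Sh s)))
            has_real_derivative (vh t \<bullet> (G *v tau) + Sh t \<bullet> (H *v nu))) (at t)"
proof -
  define v' where "v' = vector_derivative vh (at t)"
  define S' where "S' = vector_derivative Sh (at t)"
  have hv: "(vh has_vector_derivative v') (at t)" using dv vector_derivative_works v'_def by blast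
  have hS: "(Sh has_vector_derivative S') (at t)" using dS vector_derivative_works S'_def by blast
  have hAv: "((\<lambda>s. A *v vh s) has_vector_derivative A *v v') (at t)"
    by (rule bounded_linear.has_vector_derivative[OF matrix_vector_mul_bounded_linear hv])
  have hBS: "((\<lambda>s. B *v Sh s) has_vector_derivative B *v S') (at t)"
    by (rule bounded_linear.has_vector_derivative[OF matrix_vector_mul_bounded_linear hS])
  have d1: "((\<lambda>s. vh s \<bullet> (A *v vh s)) has_real_derivative (vh t \<bullet> (A *v v') + v' \<bullet> (A *v vh t))) (at t)"
    unfolding has_real_derivative_iff_has_vector_derivative
    by (rule bounded_bilinear.has_vector_derivative[OF bounded_bilinear_inner hv hAv])
  have d2: "((\<lambda>s. Sh s \<bullet> (B *v Sh s)) has_real_derivative (Sh t \<bullet> (B *v S') + S' \<bullet> (B *v Sh t))) (at t)"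
    unfolding has_real_derivative_iff_has_vector_derivative
    by (rule bounded_bilinear.has_vector_derivative[OF bounded_bilinear_inner hS hBS])
  have d: "((\<lambda>s. (1/2) * (vh s \<bullet> (A *v vh s)) + (1/2) * (Sh s \<bullet> (B *v Sh s))) has_real_derivative
      ((1/2) * (vh t \<bullet> (A *v v') + v' \<bullet> (A *v vh t)) + (1/2) * (Sh t \<bullet> (B *v S') + S' \<bullet> (B *v Sh t)))) (at t)"
    by (intro DERIV_add DERIV_cmult d1 d2)
  have s1: "v' \<bullet> (A *v vh t) = vh t \<bullet> (A *v v')"
    using inner_transpose_mv[of v' A "vh t"] sA by simp
  have s2: "S' \<bullet> (B *v Sh t) = Sh t \<bullet> (B *v S')"
    using inner_transpose_mv[of S' B "Sh t"] sB by simp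
  have s3: "Sh t \<bullet> (transpose K *v vh t) = vh t \<bullet> (K *v Sh t)"
    by (rule inner_transpose_mv)
  have "(1/2) * (vh t \<bullet> (A *v v') + v' \<bullet> (A *v vh t)) + (1/2) * (Sh t \<bullet> (B *v S') + S' \<bullet> (B *v Sh t))
      = vh t \<bullet> (A *v v') + Sh t \<bullet> (B *v S')"
    unfolding s1 s2 by simp
  also have "\<dots> = vh t \<bullet> (G *v tau) + Sh t \<bullet> (H *v nu)"
    unfolding v'_def S'_def e1 e2 by (simp add: inner_add_right inner_diff_right inner_commute[of "Sh t"] dot_lmul_matrix)
  finally show ?thesis using d DERIV_cong by blast
qed

lemma y_out:
  "vh \<bullet> (G *v tau) + Sh \<bullet> (H *v nu)
     = (block23 (transpose G) 0 (0 :: real^'f^'k) 0 (transpose H) (0 :: real^'f^'m)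
          *v stack3 vh Sh (0 :: real^'f)) \<bullet> stack2 (tau::real^'k) (nu::real^'m)"
  by (simp add: block23_mult inner_stack2 dot_lmul_matrix)

theorem theorem2:
  fixes \<Omega> \<Sigma>D \<Sigma>N :: "(real^3) set"
    and N :: "real^3 \<Rightarrow> real^3"
    and \<sigma> :: "(real^3) measure"
    and \<rho>0 \<mu> lam :: real
    and \<phi> :: "'v::finite \<Rightarrow> real^3 \<Rightarrow> real^3"
    and \<psi> :: "'s::finite \<Rightarrow> real^3 \<Rightarrow> real^3^3"
    and \<theta> :: "'f::finite \<Rightarrow> real^3 \<Rightarrow> real^3^3"
    and \<xi> :: "'k::finite \<Rightarrow> real^3 \<Rightarrow> real^3"
    and \<zeta> :: "'m::finite \<Rightarrow> real^3 \<Rightarrow> real^3"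
    and tI :: "real set"
    and vh :: "real \<Rightarrow> real^'v" and Sh :: "real \<Rightarrow> real^'s" and Fh :: "real \<Rightarrow> real^'f"
    and tauh :: "real \<Rightarrow> real^'k" and nuh :: "real \<Rightarrow> real^'m"
  assumes dom: "lipschitz_domain \<Omega>" "bounded \<Omega>"
    and split: "\<Sigma>D \<union> \<Sigma>N = frontier \<Omega>" "\<Sigma>D \<inter> \<Sigma>N = {}"
    and surf: "\<Sigma>D \<in> sets \<sigma>" "\<Sigma>N \<in> sets \<sigma>"
    and normal: "\<forall>X\<in>frontier \<Omega>. norm (N X) = 1"
    and params: "\<rho>0 > 0" "\<mu> > 0" "3 * lam + 2 * \<mu> > 0"
    and psi_sym: "\<forall>j X. transpose (\<psi> j X) = \<psi> j X"
    and reg_phi: "\<forall>i. continuous_on \<Omega> (\<phi> i) \<and> (\<forall>X\<in>\<Omega>. \<phi> i differentiable (at X))"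
    and reg_psi: "\<forall>j. continuous_on \<Omega> (\<psi> j)"
    and reg_theta: "\<forall>l. continuous_on \<Omega> (\<theta> l)"
    and indep: "lin_indep_on \<Omega> \<phi>" "lin_indep_on \<Omega> \<psi>" "lin_indep_on \<Omega> \<theta>"
    and integrable:
      "\<forall>i i'. set_integrable lborel \<Omega> (\<lambda>X. \<phi> i X \<bullet> \<phi> i' X)"
      "\<forall>j j'. set_integrable lborel \<Omega> (\<lambda>X. ddot (\<psi> j X) (elast_inv \<mu> lam (\<psi> j' X)))"
      "\<forall>l l'. set_integrable lborel \<Omega> (\<lambda>X. ddot (\<theta> l X) (\<theta> l' X))"
      "\<forall>l i. set_integrable lborel \<Omega> (\<lambda>X. ddot (\<theta> l X) (Grad (\<phi> i) X))"
      "\<forall>i l j. set_integrable lborel \<Omega> (\<lambda>X. ddot (transpose (Grad (\<phi> i) X) ** \<theta> l X) (\<psi> j X))"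
      "\<forall>i l j. set_integrable \<sigma> \<Sigma>D (\<lambda>X. \<phi> i X \<bullet> ((\<theta> l X ** \<psi> j X) *v N X))"
      "\<forall>i k. set_integrable \<sigma> \<Sigma>N (\<lambda>X. \<phi> i X \<bullet> \<xi> k X)"
      "\<forall>l j m. set_integrable \<sigma> \<Sigma>D (\<lambda>X. ((\<theta> l X ** \<psi> j X) *v N X) \<bullet> \<zeta> m X)"
    and time: "open tI"
      "\<forall>t\<in>tI. vh differentiable (at t) \<and> Sh differentiable (at t) \<and> Fh differentiable (at t)"
  shows
    \<comment> \<open>mass matrix symmetric positive definite\<close>
    "transpose (block33 (Mv \<rho>0 \<Omega> \<phi>) 0 0 0 (MS \<mu> lam \<Omega> \<psi>) 0 0 0 (MF \<Omega> \<theta>))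
        = block33 (Mv \<rho>0 \<Omega> \<phi>) 0 0 0 (MS \<mu> lam \<Omega> \<psi>) 0 0 0 (MF \<Omega> \<theta>)
     \<and> (\<forall>x. x \<noteq> 0 \<longrightarrow>
          x \<bullet> (block33 (Mv \<rho>0 \<Omega> \<phi>) 0 0 0 (MS \<mu> lam \<Omega> \<psi>) 0 0 0 (MF \<Omega> \<theta>) *v x) > 0)
     \<comment> \<open>structure matrix skew-symmetric\<close>
     \<and> (\<forall>Fc. transpose (block33 0 (- Kmat \<Omega> \<Sigma>D \<sigma> N \<phi> \<psi> \<theta> Fc) (- transpose (Zmat \<Omega> \<phi> \<theta>))
                               (transpose (Kmat \<Omega> \<Sigma>D \<sigma> N \<phi> \<psi> \<theta> Fc)) 0 0
                               (Zmat \<Omega> \<phi> \<theta>) 0 0)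
             = - block33 0 (- Kmat \<Omega> \<Sigma>D \<sigma> N \<phi> \<psi> \<theta> Fc) (- transpose (Zmat \<Omega> \<phi> \<theta>))
                               (transpose (Kmat \<Omega> \<Sigma>D \<sigma> N \<phi> \<psi> \<theta> Fc)) 0 0
                               (Zmat \<Omega> \<phi> \<theta>) 0 0)
     \<comment> \<open>discretised weak form (Galerkin) is the port-Hamiltonian state equation\<close>
     \<and> (\<forall>t\<in>tI.
         (\<forall>dv :: real^'v. \<forall>dS :: real^'s. \<forall>dT :: real^'f.
            set_lebesgue_integral lborel \<Omega> (\<lambda>X.
                field dv \<phi> X \<bullet> (\<rho>0 *\<^sub>R tder (\<lambda>s. field (vh s) \<phi>) t X)
              + ddot (transpose (Grad (field dv \<phi>) X) ** field (Fh t) \<theta> X) (field (Sh t) \<psi> X))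
            - set_lebesgue_integral \<sigma> \<Sigma>D (\<lambda>X.
                field dv \<phi> X \<bullet> ((field (Fh t) \<theta> X ** field (Sh t) \<psi> X) *v N X))
            - set_lebesgue_integral \<sigma> \<Sigma>N (\<lambda>X. field dv \<phi> X \<bullet> field (tauh t) \<xi> X) = 0
          \<and> set_lebesgue_integral lborel \<Omega> (\<lambda>X.
                ddot (field dS \<psi> X) (elast_inv \<mu> lam (tder (\<lambda>s. field (Sh s) \<psi>) t X))
              - ddot (field dS \<psi> X) (transpose (field (Fh t) \<theta> X) ** Grad (field (vh t) \<phi>) X))
            + set_lebesgue_integral \<sigma> \<Sigma>D (\<lambda>X.
                ((field (Fh t) \<theta> X ** field dS \<psi> X) *v N X) \<bullet> field (vh t) \<phi> X)
            - set_lebesgue_integral \<sigma> \<Sigma>D (\<lambda>X.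
                ((field (Fh t) \<theta> X ** field dS \<psi> X) *v N X) \<bullet> field (nuh t) \<zeta> X) = 0
          \<and> set_lebesgue_integral lborel \<Omega> (\<lambda>X.
                ddot (field dT \<theta> X) (tder (\<lambda>s. field (Fh s) \<theta>) t X)
              - ddot (field dT \<theta> X) (Grad (field (vh t) \<phi>) X)) = 0)
       \<longleftrightarrow>
         block33 (Mv \<rho>0 \<Omega> \<phi>) 0 0 0 (MS \<mu> lam \<Omega> \<psi>) 0 0 0 (MF \<Omega> \<theta>)
           *v stack3 (vector_derivative vh (at t)) (vector_derivative Sh (at t)) (vector_derivative Fh (at t))
         = block33 0 (- Kmat \<Omega> \<Sigma>D \<sigma> N \<phi> \<psi> \<theta> (Fh t)) (- transpose (Zmat \<Omega> \<phi> \<theta>))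
                   (transpose (Kmat \<Omega> \<Sigma>D \<sigma> N \<phi> \<psi> \<theta> (Fh t))) 0 0
                   (Zmat \<Omega> \<phi> \<theta>) 0 0
             *v stack3 (vh t) (Sh t) (0 :: real^'f)
           + block32 (Gtau \<Sigma>N \<sigma> \<phi> \<xi>) 0 0 (Gnu \<Sigma>D \<sigma> N \<psi> \<theta> \<zeta> (Fh t)) 0 0
             *v stack2 (tauh t) (nuh t))
     \<comment> \<open>power balance along solutions of the state equation\<close>
     \<and> (\<forall>t\<in>tI.
         block33 (Mv \<rho>0 \<Omega> \<phi>) 0 0 0 (MS \<mu> lam \<Omega> \<psi>) 0 0 0 (MF \<Omega> \<theta>)
           *v stack3 (vector_derivative vh (at t)) (vector_derivative Sh (at t)) (vector_derivative Fh (at t))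
         = block33 0 (- Kmat \<Omega> \<Sigma>D \<sigma> N \<phi> \<psi> \<theta> (Fh t)) (- transpose (Zmat \<Omega> \<phi> \<theta>))
                   (transpose (Kmat \<Omega> \<Sigma>D \<sigma> N \<phi> \<psi> \<theta> (Fh t))) 0 0
                   (Zmat \<Omega> \<phi> \<theta>) 0 0
             *v stack3 (vh t) (Sh t) (0 :: real^'f)
           + block32 (Gtau \<Sigma>N \<sigma> \<phi> \<xi>) 0 0 (Gnu \<Sigma>D \<sigma> N \<psi> \<theta> \<zeta> (Fh t)) 0 0
             *v stack2 (tauh t) (nuh t)
       \<longrightarrow>
         ((\<lambda>s. (1/2) * (vh s \<bullet> (Mv \<rho>0 \<Omega> \<phi> *v vh s)) + (1/2) * (Sh s \<bullet> (MS \<mu> lam \<Omega> \<psi> *v Sh s)))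
            has_real_derivative
              (vh t \<bullet> (Gtau \<Sigma>N \<sigma> \<phi> \<xi> *v tauh t) + Sh t \<bullet> (Gnu \<Sigma>D \<sigma> N \<psi> \<theta> \<zeta> (Fh t) *v nuh t))) (at t)
       \<and> vh t \<bullet> (Gtau \<Sigma>N \<sigma> \<phi> \<xi> *v tauh t) + Sh t \<bullet> (Gnu \<Sigma>D \<sigma> N \<psi> \<theta> \<zeta> (Fh t) *v nuh t)
         = (block23 (transpose (Gtau \<Sigma>N \<sigma> \<phi> \<xi>)) 0 (0 :: real^'f^'k)
                    0 (transpose (Gnu \<Sigma>D \<sigma> N \<psi> \<theta> \<zeta> (Fh t))) (0 :: real^'f^'m)
              *v stack3 (vh t) (Sh t) (0 :: real^'f)) \<bullet> stack2 (tauh t) (nuh t))"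
proof -
  have opn: "open \<Omega>" using dom(1) unfolding lipschitz_domain_def by blast
  have dphi: "\<forall>X\<in>\<Omega>. \<forall>i. \<phi> i differentiable (at X)" using reg_phi by blast
  have cphi: "\<forall>i. continuous_on \<Omega> (\<phi> i)" using reg_phi by blast
  note i1 = integrable(1) and i2 = integrable(2) and i3 = integrable(3) and i4 = integrable(4)
    and i5 = integrable(5) and i6 = integrable(6) and i7 = integrable(7) and i8 = integrable(8)
  note mu = params(2) and lm = params(3)
  have P1: "transpose (block33 (Mv \<rho>0 \<Omega> \<phi>) 0 0 0 (MS \<mu> lam \<Omega> \<psi>) 0 0 0 (MF \<Omega> \<theta>))
        = block33 (Mv \<rho>0 \<Omega> \<phi>) 0 0 0 (MS \<mu> lam \<Omega> \<psi>) 0 0 0 (MF \<Omega> \<theta>)"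
    by (simp add: transpose_block33 sym_Mv sym_MF sym_MS[OF mu lm psi_sym])
  have qpos: "\<And>a. a \<bullet> (Mv \<rho>0 \<Omega> \<phi> *v a) \<ge> 0 \<and> (a \<noteq> 0 \<longrightarrow> a \<bullet> (Mv \<rho>0 \<Omega> \<phi> *v a) > 0)"
    using pos_Mv[OF opn params(1) cphi indep(1) i1] by (metis inner_zero_left order_less_imp_le order_refl)
  have qposS: "\<And>a. a \<bullet> (MS \<mu> lam \<Omega> \<psi> *v a) \<ge> 0 \<and> (a \<noteq> 0 \<longrightarrow> a \<bullet> (MS \<mu> lam \<Omega> \<psi> *v a) > 0)"
    using pos_MS[OF opn mu lm psi_sym reg_psi indep(2) i2] by (metis inner_zero_left order_less_imp_le order_refl)
  have qposF: "\<And>a. a \<bullet> (MF \<Omega> \<theta> *v a) \<ge> 0 \<and> (a \<noteq> 0 \<longrightarrow> a \<bullet> (MF \<Omega> \<theta> *v a) > 0)"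
    using pos_MF[OF opn reg_theta indep(3) i3] by (metis inner_zero_left order_less_imp_le order_refl)
  have P2: "\<forall>x. x \<noteq> 0 \<longrightarrow>
          x \<bullet> (block33 (Mv \<rho>0 \<Omega> \<phi>) 0 0 0 (MS \<mu> lam \<Omega> \<psi>) 0 0 0 (MF \<Omega> \<theta>) *v x) > 0"
  proof (intro allI impI)
    fix x :: "real^('v + ('s + 'f))" assume x: "x \<noteq> 0"
    obtain a b c where abc: "x = stack3 a b c" using stack3_surj by blast
    have nz: "a \<noteq> 0 \<or> b \<noteq> 0 \<or> c \<noteq> 0" using x abc stack3_zero by blast
    have "x \<bullet> (block33 (Mv \<rho>0 \<Omega> \<phi>) 0 0 0 (MS \<mu> lam \<Omega> \<psi>) 0 0 0 (MF \<Omega> \<theta>) *v x)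
       = a \<bullet> (Mv \<rho>0 \<Omega> \<phi> *v a) + b \<bullet> (MS \<mu> lam \<Omega> \<psi> *v b) + c \<bullet> (MF \<Omega> \<theta> *v c)"
      unfolding abc by (simp add: block33_mult inner_stack3)
    moreover have "a \<bullet> (Mv \<rho>0 \<Omega> \<phi> *v a) + b \<bullet> (MS \<mu> lam \<Omega> \<psi> *v b) + c \<bullet> (MF \<Omega> \<theta> *v c) > 0"
      using nz qpos[of a] qposS[of b] qposF[of c] by auto
    ultimately show "x \<bullet> (block33 (Mv \<rho>0 \<Omega> \<phi>) 0 0 0 (MS \<mu> lam \<Omega> \<psi>) 0 0 0 (MF \<Omega> \<theta>) *v x) > 0" by simp
  qed
  have P3: "\<forall>Fc. transpose (block33 0 (- Kmat \<Omega> \<Sigma>D \<sigma> N \<phi> \<psi> \<theta> Fc) (- transpose (Zmat \<Omega> \<phi> \<theta>))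
                               (transpose (Kmat \<Omega> \<Sigma>D \<sigma> N \<phi> \<psi> \<theta> Fc)) 0 0
                               (Zmat \<Omega> \<phi> \<theta>) 0 0)
             = - block33 0 (- Kmat \<Omega> \<Sigma>D \<sigma> N \<phi> \<psi> \<theta> Fc) (- transpose (Zmat \<Omega> \<phi> \<theta>))
                               (transpose (Kmat \<Omega> \<Sigma>D \<sigma> N \<phi> \<psi> \<theta> Fc)) 0 0
                               (Zmat \<Omega> \<phi> \<theta>) 0 0"
    by (simp add: transpose_block33 uminus_block33)
  have P4: "(\<forall>t\<in>tI.
         (\<forall>dv :: real^'v. \<forall>dS :: real^'s. \<forall>dT :: real^'f.
            set_lebesgue_integral lborel \<Omega> (\<lambda>X.
                field dv \<phi> X \<bullet> (\<rho>0 *\<^sub>R tder (\<lambda>s. field (vh s) \<phi>) t X)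
              + ddot (transpose (Grad (field dv \<phi>) X) ** field (Fh t) \<theta> X) (field (Sh t) \<psi> X))
            - set_lebesgue_integral \<sigma> \<Sigma>D (\<lambda>X.
                field dv \<phi> X \<bullet> ((field (Fh t) \<theta> X ** field (Sh t) \<psi> X) *v N X))
            - set_lebesgue_integral \<sigma> \<Sigma>N (\<lambda>X. field dv \<phi> X \<bullet> field (tauh t) \<xi> X) = 0
          \<and> set_lebesgue_integral lborel \<Omega> (\<lambda>X.
                ddot (field dS \<psi> X) (elast_inv \<mu> lam (tder (\<lambda>s. field (Sh s) \<psi>) t X))
              - ddot (field dS \<psi> X) (transpose (field (Fh t) \<theta> X) ** Grad (field (vh t) \<phi>) X))
            + set_lebesgue_integral \<sigma> \<Sigma>D (\<lambda>X.
                ((field (Fh t) \<theta> X ** field dS \<psi> X) *v N X) \<bullet> field (vh t) \<phi> X)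
            - set_lebesgue_integral \<sigma> \<Sigma>D (\<lambda>X.
                ((field (Fh t) \<theta> X ** field dS \<psi> X) *v N X) \<bullet> field (nuh t) \<zeta> X) = 0
          \<and> set_lebesgue_integral lborel \<Omega> (\<lambda>X.
                ddot (field dT \<theta> X) (tder (\<lambda>s. field (Fh s) \<theta>) t X)
              - ddot (field dT \<theta> X) (Grad (field (vh t) \<phi>) X)) = 0)
       \<longleftrightarrow>
         block33 (Mv \<rho>0 \<Omega> \<phi>) 0 0 0 (MS \<mu> lam \<Omega> \<psi>) 0 0 0 (MF \<Omega> \<theta>)
           *v stack3 (vector_derivative vh (at t)) (vector_derivative Sh (at t)) (vector_derivative Fh (at t))
         = block33 0 (- Kmat \<Omega> \<Sigma>D \<sigma> N \<phi> \<psi> \<theta> (Fh t)) (- transpose (Zmat \<Omega> \<phi> \<theta>))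
                   (transpose (Kmat \<Omega> \<Sigma>D \<sigma> N \<phi> \<psi> \<theta> (Fh t))) 0 0
                   (Zmat \<Omega> \<phi> \<theta>) 0 0
             *v stack3 (vh t) (Sh t) (0 :: real^'f)
           + block32 (Gtau \<Sigma>N \<sigma> \<phi> \<xi>) 0 0 (Gnu \<Sigma>D \<sigma> N \<psi> \<theta> \<zeta> (Fh t)) 0 0
             *v stack2 (tauh t) (nuh t))"
  proof (intro ballI, goal_cases)
    case (1 t)
    then have t: "t \<in> tI" .
    have dvh: "vh differentiable (at t)" and dSh: "Sh differentiable (at t)" and dFh: "Fh differentiable (at t)"
      using time(2) t by auto
    have tv: "tder (\<lambda>s. field (vh s) \<phi>) t X = field (vector_derivative vh (at t)) \<phi> X" for X
      by (rule tder_field[OF dvh])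
    have tS: "tder (\<lambda>s. field (Sh s) \<psi>) t X = field (vector_derivative Sh (at t)) \<psi> X" for X
      by (rule tder_field[OF dSh])
    have tF: "tder (\<lambda>s. field (Fh s) \<theta>) t X = field (vector_derivative Fh (at t)) \<theta> X" for X
      by (rule tder_field[OF dFh])
    show ?case
      unfolding tv tS tF weak1[OF dphi i1 i5 i6 i7] weak2[OF dphi mu lm psi_sym i2 i5 i6 i8]
        weak3[OF dphi i3 i4] all_inner_zero block_eq_iff ..
  qed
  have P5: "(\<forall>t\<in>tI.
         block33 (Mv \<rho>0 \<Omega> \<phi>) 0 0 0 (MS \<mu> lam \<Omega> \<psi>) 0 0 0 (MF \<Omega> \<theta>)
           *v stack3 (vector_derivative vh (at t)) (vector_derivative Sh (at t)) (vector_derivative Fh (at t))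
         = block33 0 (- Kmat \<Omega> \<Sigma>D \<sigma> N \<phi> \<psi> \<theta> (Fh t)) (- transpose (Zmat \<Omega> \<phi> \<theta>))
                   (transpose (Kmat \<Omega> \<Sigma>D \<sigma> N \<phi> \<psi> \<theta> (Fh t))) 0 0
                   (Zmat \<Omega> \<phi> \<theta>) 0 0
             *v stack3 (vh t) (Sh t) (0 :: real^'f)
           + block32 (Gtau \<Sigma>N \<sigma> \<phi> \<xi>) 0 0 (Gnu \<Sigma>D \<sigma> N \<psi> \<theta> \<zeta> (Fh t)) 0 0
             *v stack2 (tauh t) (nuh t)
       \<longrightarrow>
         ((\<lambda>s. (1/2) * (vh s \<bullet> (Mv \<rho>0 \<Omega> \<phi> *v vh s)) + (1/2) * (Sh s \<bullet> (MS \<mu> lam \<Omega> \<psi> *v Sh s)))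
            has_real_derivative
              (vh t \<bullet> (Gtau \<Sigma>N \<sigma> \<phi> \<xi> *v tauh t) + Sh t \<bullet> (Gnu \<Sigma>D \<sigma> N \<psi> \<theta> \<zeta> (Fh t) *v nuh t))) (at t)
       \<and> vh t \<bullet> (Gtau \<Sigma>N \<sigma> \<phi> \<xi> *v tauh t) + Sh t \<bullet> (Gnu \<Sigma>D \<sigma> N \<psi> \<theta> \<zeta> (Fh t) *v nuh t)
         = (block23 (transpose (Gtau \<Sigma>N \<sigma> \<phi> \<xi>)) 0 (0 :: real^'f^'k)
                    0 (transpose (Gnu \<Sigma>D \<sigma> N \<psi> \<theta> \<zeta> (Fh t))) (0 :: real^'f^'m)
              *v stack3 (vh t) (Sh t) (0 :: real^'f)) \<bullet> stack2 (tauh t) (nuh t))"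
  proof (intro ballI impI conjI)
    fix t assume t: "t \<in> tI"
    have dvh: "vh differentiable (at t)" and dSh: "Sh differentiable (at t)"
      using time(2) t by auto
    assume be: "block33 (Mv \<rho>0 \<Omega> \<phi>) 0 0 0 (MS \<mu> lam \<Omega> \<psi>) 0 0 0 (MF \<Omega> \<theta>)
           *v stack3 (vector_derivative vh (at t)) (vector_derivative Sh (at t)) (vector_derivative Fh (at t))
         = block33 0 (- Kmat \<Omega> \<Sigma>D \<sigma> N \<phi> \<psi> \<theta> (Fh t)) (- transpose (Zmat \<Omega> \<phi> \<theta>))
                   (transpose (Kmat \<Omega> \<Sigma>D \<sigma> N \<phi> \<psi> \<theta> (Fh t))) 0 0
                   (Zmat \<Omega> \<phi> \<theta>) 0 0
             *v stack3 (vh t) (Sh t) (0 :: real^'f)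
           + block32 (Gtau \<Sigma>N \<sigma> \<phi> \<xi>) 0 0 (Gnu \<Sigma>D \<sigma> N \<psi> \<theta> \<zeta> (Fh t)) 0 0
             *v stack2 (tauh t) (nuh t)"
    then have r: "Mv \<rho>0 \<Omega> \<phi> *v vector_derivative vh (at t) + Kmat \<Omega> \<Sigma>D \<sigma> N \<phi> \<psi> \<theta> (Fh t) *v Sh t - Gtau \<Sigma>N \<sigma> \<phi> \<xi> *v tauh t = 0"
        "MS \<mu> lam \<Omega> \<psi> *v vector_derivative Sh (at t) - transpose (Kmat \<Omega> \<Sigma>D \<sigma> N \<phi> \<psi> \<theta> (Fh t)) *v vh t - Gnu \<Sigma>D \<sigma> N \<psi> \<theta> \<zeta> (Fh t) *v nuh t = 0"
      unfolding block_eq_iff by auto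
    have e1: "Mv \<rho>0 \<Omega> \<phi> *v vector_derivative vh (at t) = - (Kmat \<Omega> \<Sigma>D \<sigma> N \<phi> \<psi> \<theta> (Fh t) *v Sh t) + Gtau \<Sigma>N \<sigma> \<phi> \<xi> *v tauh t"
      using r(1) by (simp add: algebra_simps eq_neg_iff_add_eq_0 diff_eq_eq)
    have e2: "MS \<mu> lam \<Omega> \<psi> *v vector_derivative Sh (at t) = transpose (Kmat \<Omega> \<Sigma>D \<sigma> N \<phi> \<psi> \<theta> (Fh t)) *v vh t + Gnu \<Sigma>D \<sigma> N \<psi> \<theta> \<zeta> (Fh t) *v nuh t"
      using r(2) by (simp add: algebra_simps diff_eq_eq)
    show "((\<lambda>s. (1/2) * (vh s \<bullet> (Mv \<rho>0 \<Omega> \<phi> *v vh s)) + (1/2) * (Sh s \<bullet> (MS \<mu> lam \<Omega> \<psi> *v Sh s)))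
            has_real_derivative
              (vh t \<bullet> (Gtau \<Sigma>N \<sigma> \<phi> \<xi> *v tauh t) + Sh t \<bullet> (Gnu \<Sigma>D \<sigma> N \<psi> \<theta> \<zeta> (Fh t) *v nuh t))) (at t)"
      by (rule power_bal[OF sym_Mv sym_MS[OF mu lm psi_sym] dvh dSh e1 e2])
    show "vh t \<bullet> (Gtau \<Sigma>N \<sigma> \<phi> \<xi> *v tauh t) + Sh t \<bullet> (Gnu \<Sigma>D \<sigma> N \<psi> \<theta> \<zeta> (Fh t) *v nuh t)
         = (block23 (transpose (Gtau \<Sigma>N \<sigma> \<phi> \<xi>)) 0 (0 :: real^'f^'k)
                    0 (transpose (Gnu \<Sigma>D \<sigma> N \<psi> \<theta> \<zeta> (Fh t))) (0 :: real^'f^'m)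
              *v stack3 (vh t) (Sh t) (0 :: real^'f)) \<bullet> stack2 (tauh t) (nuh t)"
      by (rule y_out)
  qed
  show ?thesis using P1 P2 P3 P4 P5 by blast
qed

end
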